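(* Suppose $\mathfrak{c}^{\mathrm{cone}}_{d-1}<\infty$, and let $C\subset\mathbb{R}^d$ be a simplicial rational $d$-cone with extreme integral generators $v_1,\dots,v_d$. Then: (a) there is a system of unimodular subcones $C_1,\dots,C_k\subset C$ covering the corner of $C$ at $v_1$ such that $\mathrm{Hilb}(C_j)\subset(\mathfrak{c}^{\mathrm{cone}}_{d-1}+1)\Delta_C$ for all $j\in[1,k]$; (b) moreover, each element $w\ne v_1$ of $\mathrm{Hilb}(C_j)$, $j\in[1,k]$, has a representation $w=\xi_1v_1+\dots+\xi_dv_d$ with $\xi_1<1$.
   Context: Cones are polyhedral, rational, pointed; $\mathrm{Hilb}(C)$ is the minimal generating set of $C\cap\mathbb{Z}^d$; extreme integral generators are the primitive lattice vectors on the edges; $\Delta_C=\mathrm{conv}(O,\text{extreme integral generators})$. A unimodular cone is a simplicial cone $D$ whose extreme integral generators generate a direct summand of $\mathbb{Z}^d$ (equivalently $\Delta_D$ is a unimodular simplex). For an extreme generator $v$ of $C$, a system of subcones $C_1,\dots,C_k\subset C$ covers the corner of $C$ at $v$ if $v\in\mathrm{Hilb}(C_j)$ for all $j$ and $\bigcup_j C_j$ contains a neighborhood of $v$ in $C$. $\mathfrak{c}_{e}^{\mathrm{cone}}$ is the infimum of natural $c$ such that every rational $e$-dimensional cone $C\subset\mathbb{R}^e$ admits a unimodular cover $C=\bigcup_j C_j$ (finite family of unimodular cones with union $C$) with $\mathrm{Hilb}(C_j)\subset c\Delta_C$; since the notion is invariant under lattice isomorphisms, it applies to cones in any rank-$e$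 lattice. *)

theory Defs
  imports Complex_Main "HOL-Library.Extended_Nat"
begin

text \<open>Points of R^d are modelled as functions nat => real vanishing at all
coordinates >= d; the lattice Z^d consists of those with integral coordinates.
All linear operations are written coordinatewise.\<close>

type_synonym vec = "nat \<Rightarrow> real"

definition space :: "nat \<Rightarrow> vec set" where
  "space d = {x. \<forall>i\<ge>d. x i = 0}"

definition lattice :: "nat \<Rightarrow> vec set" where
  "lattice d = {x \<in> space d. \<forall>i. x i \<in> \<int>}"

definition smul :: "real \<Rightarrow> vec \<Rightarrow> vec" where
  "smul t x = (\<lambda>i. t * x i)"

definition pos_hull :: "vec set \<Rightarrow> vec set" where
  "pos_hull S = {(\<lambda>i. \<Sum>v\<in>T. c v * v i) | T c. finite T \<and> T \<subseteq> S \<and> (\<forall>v\<in>T. c v \<ge> 0)}"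

definition lin_span :: "vec set \<Rightarrow> vec set" where
  "lin_span S = {(\<lambda>i. \<Sum>v\<in>T. c v * v i) | T c. finite T \<and> T \<subseteq> S}"

definition int_span :: "vec set \<Rightarrow> vec set" where
  "int_span S = {(\<lambda>i. \<Sum>v\<in>T. c v * v i) | T c. finite T \<and> T \<subseteq> S \<and> (\<forall>v\<in>T. c v \<in> \<int>)}"

definition lin_indep :: "vec set \<Rightarrow> bool" where
  "lin_indep S \<longleftrightarrow> (\<forall>T c. finite T \<and> T \<subseteq> S \<and> (\<lambda>i. \<Sum>v\<in>T. c v * v i) = (\<lambda>i. 0)
                      \<longrightarrow> (\<forall>v\<in>T. c v = 0))"

definition rational_cone :: "nat \<Rightarrow> vec set \<Rightarrow> bool" where
  "rational_cone d C \<longleftrightarrow>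
     (\<exists>S. finite S \<and> S \<subseteq> lattice d \<and> C = pos_hull S) \<and>
     (\<forall>x. x \<in> C \<and> smul (-1) x \<in> C \<longrightarrow> x = (\<lambda>i. 0))"

definition full_dim :: "nat \<Rightarrow> vec set \<Rightarrow> bool" where
  "full_dim d C \<longleftrightarrow> space d \<subseteq> lin_span C"

definition extreme_ray :: "vec set \<Rightarrow> vec \<Rightarrow> bool" where
  "extreme_ray C v \<longleftrightarrow> v \<in> C \<and> v \<noteq> (\<lambda>i. 0) \<and>
     (\<forall>x\<in>C. \<forall>y\<in>C. (\<exists>t\<ge>0. (\<lambda>i. x i + y i) = smul t v) \<longrightarrow>
         (\<exists>s\<ge>0. x = smul s v) \<and> (\<exists>s\<ge>0. y = smul s v))"

definition ext_gens :: "nat \<Rightarrow> vec set \<Rightarrow> vec set" where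
  "ext_gens d C = {v \<in> lattice d. extreme_ray C v \<and>
                     (\<forall>t. 0 < t \<and> t < 1 \<longrightarrow> smul t v \<notin> lattice d)}"

text \<open>Hilbert basis: the minimal generating set of the monoid C \<inter> Z^d, which for
pointed cones is the set of its irreducible (nonzero, indecomposable) elements.\<close>
definition hilb :: "nat \<Rightarrow> vec set \<Rightarrow> vec set" where
  "hilb d C = {x \<in> C \<inter> lattice d. x \<noteq> (\<lambda>i. 0) \<and>
     \<not> (\<exists>y\<in>C \<inter> lattice d. \<exists>z\<in>C \<inter> lattice d. y \<noteq> (\<lambda>i. 0) \<and> z \<noteq> (\<lambda>i. 0) \<and>
          x = (\<lambda>i. y i + z i))}"

definition convex_hull_v :: "vec set \<Rightarrow> vec set" where
  "convex_hull_v S = {(\<lambda>i. \<Sum>v\<in>T. c v * v i) | T c. finite T \<and> T \<subseteq> S \<and>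
        (\<forall>v\<in>T. c v \<ge> 0) \<and> (\<Sum>v\<in>T. c v) = 1}"

definition Delta :: "nat \<Rightarrow> vec set \<Rightarrow> vec set" where
  "Delta d C = convex_hull_v (insert (\<lambda>i. 0) (ext_gens d C))"

definition scale_set :: "real \<Rightarrow> vec set \<Rightarrow> vec set" where
  "scale_set c A = smul c ` A"

definition simplicial :: "nat \<Rightarrow> vec set \<Rightarrow> bool" where
  "simplicial d C \<longleftrightarrow> rational_cone d C \<and> lin_indep (ext_gens d C)"

text \<open>Unimodular cone: simplicial, extreme integral generators generate a direct
summand of Z^d (i.e. lattice points of their real span are integral combinations).\<close>
definition unimodular :: "nat \<Rightarrow> vec set \<Rightarrow> bool" where
  "unimodular d D \<longleftrightarrow> simplicial d D \<and>
     lattice d \<inter> lin_span (ext_gens d D) \<subseteq> int_span (ext_gens d D)"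

definition cone_const_ok :: "nat \<Rightarrow> nat \<Rightarrow> bool" where
  "cone_const_ok e c \<longleftrightarrow> (\<forall>C. rational_cone e C \<and> full_dim e C \<longrightarrow>
      (\<exists>\<C>. finite \<C> \<and> (\<forall>D\<in>\<C>. unimodular e D) \<and> \<Union>\<C> = C \<and>
           (\<forall>D\<in>\<C>. hilb e D \<subseteq> scale_set (real c) (Delta e C))))"

text \<open>The constant c_e^cone, with value infinity when no such c exists.\<close>
definition cone_const :: "nat \<Rightarrow> enat" where
  "cone_const e = Inf (enat ` {c. cone_const_ok e c})"

definition covers_corner :: "nat \<Rightarrow> vec set \<Rightarrow> vec \<Rightarrow> vec set set \<Rightarrow> bool" where
  "covers_corner d C v \<C> \<longleftrightarrow> (\<forall>D\<in>\<C>. D \<subseteq> C \<and> v \<in> hilb d D) \<and>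
     (\<exists>\<epsilon>>0. \<forall>x\<in>C. (\<forall>i<d. \<bar>x i - v i\<bar> < \<epsilon>) \<longrightarrow> x \<in> \<Union>\<C>)"

end

theory Submission
  imports Defs
begin


abbreviation vzero :: vec where "vzero \<equiv> (\<lambda>i. 0)"

definition isum :: "'a set \<Rightarrow> ('a \<Rightarrow> real) \<Rightarrow> ('a \<Rightarrow> vec) \<Rightarrow> vec" where
  "isum I a w = (\<lambda>i. \<Sum>j\<in>I. a j * w j i)"

lemma isum_apply: "isum I a w i = (\<Sum>j\<in>I. a j * w j i)"
  by (simp add: isum_def)

lemma isum_empty[simp]: "isum {} a w = vzero"
  by (simp add: isum_def)

lemma isum_insert: "finite I \<Longrightarrow> j \<notin> I \<Longrightarrow>
   isum (insert j I) a w = (\<lambda>i. a j * w j i + isum I a w i)"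
  by (simp add: isum_def)

lemma isum_add: "(\<lambda>i. isum I a w i + isum I b w i) = isum I (\<lambda>j. a j + b j) w"
  by (simp add: isum_def sum.distrib algebra_simps)

lemma isum_smul: "smul t (isum I a w) = isum I (\<lambda>j. t * a j) w"
  by (simp add: isum_def smul_def sum_distrib_left algebra_simps)

lemma isum_cong: "(\<And>j i. j \<in> I \<Longrightarrow> a j * w j i = b j * u j i) \<Longrightarrow> isum I a w = isum I b u"
  unfolding isum_def by (rule ext, rule sum.cong, auto)

lemma isum_zero_coef: "(\<And>j. j \<in> I \<Longrightarrow> a j = 0) \<Longrightarrow> isum I a w = vzero"
  by (simp add: isum_def)

lemma isum_extend: "finite S \<Longrightarrow> T \<subseteq> S \<Longrightarrow>
  isum T a w = isum S (\<lambda>j. if j \<in> T then a j else 0) w"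
  unfolding isum_def
  by (rule ext, rule sum.mono_neutral_cong_left, auto)

lemma isum_reindex: "inj_on f I \<Longrightarrow> isum (f ` I) a w = isum I (a \<circ> f) (w \<circ> f)"
  unfolding isum_def by (rule ext) (simp add: sum.reindex)

lemma isum_diff: "(\<lambda>i. isum I a w i - isum I b w i) = isum I (\<lambda>j. a j - b j) w"
  by (simp add: isum_def sum_subtractf algebra_simps)

lemma isum_union_add: assumes "finite T1" "finite T2"
  shows "(\<lambda>i. isum T1 c1 w i + isum T2 c2 w i) =
     isum (T1\<union>T2) (\<lambda>v. (if v\<in>T1 then c1 v else 0) + (if v\<in>T2 then c2 v else 0)) w"
proof -
  have fin: "finite (T1 \<union> T2)" using assms by auto
  have e1: "isum T1 c1 w = isum (T1\<union>T2) (\<lambda>v. if v\<in>T1 then c1 v else 0) w"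
    by (rule isum_extend[OF fin]) auto
  have e2: "isum T2 c2 w = isum (T1\<union>T2) (\<lambda>v. if v\<in>T2 then c2 v else 0) w"
    by (rule isum_extend[OF fin]) auto
  show ?thesis unfolding e1 e2 by (rule isum_add)
qed

lemma pos_hull_isum_def: "pos_hull S = {isum T c (\<lambda>v. v) | T c. finite T \<and> T \<subseteq> S \<and> (\<forall>v\<in>T. c v \<ge> 0)}"
  unfolding pos_hull_def isum_def by simp

lemma lin_span_isum_def: "lin_span S = {isum T c (\<lambda>v. v) | T c. finite T \<and> T \<subseteq> S}"
  unfolding lin_span_def isum_def by simp

lemma int_span_isum_def: "int_span S = {isum T c (\<lambda>v. v) | T c. finite T \<and> T \<subseteq> S \<and> (\<forall>v\<in>T. c v \<in> \<int>)}"
  unfolding int_span_def isum_def by simp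

lemma isum_closed:
  assumes "finite I" "\<And>j. j \<in> I \<Longrightarrow> P (a j)" "\<And>j. j \<in> I \<Longrightarrow> w j \<in> K"
    "vzero \<in> K" "\<And>x y. x \<in> K \<Longrightarrow> y \<in> K \<Longrightarrow> (\<lambda>i. x i + y i) \<in> K"
    "\<And>t x. P t \<Longrightarrow> x \<in> K \<Longrightarrow> smul t x \<in> K"
  shows "isum I a w \<in> K"
  using assms
proof (induction I rule: finite_induct)
  case empty then show ?case by simp
next
  case (insert j I)
  have "isum I a w \<in> K" using insert by auto
  moreover have "smul (a j) (w j) \<in> K" using insert by auto
  ultimately have "(\<lambda>i. smul (a j) (w j) i + isum I a w i) \<in> K" using insert by blast
  moreover have "isum (insert j I) a w = (\<lambda>i. smul (a j) (w j) i + isum I a w i)"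
    using insert by (simp add: isum_insert smul_def)
  ultimately show ?case by simp
qed

lemma pos_hull_zero: "vzero \<in> pos_hull S"
proof -
  have "vzero = isum {} (\<lambda>_. 0) (\<lambda>v. v)" by simp
  then show ?thesis unfolding pos_hull_isum_def by blast
qed

lemma pos_hull_add: assumes "x \<in> pos_hull S" "y \<in> pos_hull S" shows "(\<lambda>i. x i + y i) \<in> pos_hull S"
proof -
  obtain T1 c1 where 1: "finite T1" "T1 \<subseteq> S" "\<forall>v\<in>T1. c1 v \<ge> 0" "x = isum T1 c1 (\<lambda>v. v)"
    using assms(1) unfolding pos_hull_isum_def by auto
  obtain T2 c2 where 2: "finite T2" "T2 \<subseteq> S" "\<forall>v\<in>T2. c2 v \<ge> 0" "y = isum T2 c2 (\<lambda>v. v)"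
    using assms(2) unfolding pos_hull_isum_def by auto
  have fin: "finite (T1 \<union> T2)" using 1 2 by auto
  have "(\<lambda>i. x i + y i) = isum (T1 \<union> T2) (\<lambda>v. (if v \<in> T1 then c1 v else 0) + (if v \<in> T2 then c2 v else 0)) (\<lambda>v. v)"
    unfolding 1(4) 2(4) by (rule isum_union_add; fact)
  then show ?thesis unfolding pos_hull_isum_def using 1 2 fin by (auto intro!: exI[of _ "T1 \<union> T2"])
qed

lemma pos_hull_smul: assumes "x \<in> pos_hull S" "t \<ge> 0" shows "smul t x \<in> pos_hull S"
proof -
  obtain T c where 1: "finite T" "T \<subseteq> S" "\<forall>v\<in>T. c v \<ge> 0" "x = isum T c (\<lambda>v. v)"
    using assms(1) unfolding pos_hull_isum_def by auto
  show ?thesis unfolding pos_hull_isum_def 1(4) isum_smul using 1 assms(2)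
    by (auto intro!: exI[of _ T])
qed

lemma pos_hull_base: "x \<in> S \<Longrightarrow> x \<in> pos_hull S"
  unfolding pos_hull_isum_def
  by (rule CollectI, rule exI[of _ "{x}"], rule exI[of _ "\<lambda>_. 1"], auto simp: isum_def)

lemma pos_hull_isum: "finite I \<Longrightarrow> (\<And>j. j \<in> I \<Longrightarrow> a j \<ge> 0) \<Longrightarrow> (\<And>j. j \<in> I \<Longrightarrow> w j \<in> pos_hull S)
   \<Longrightarrow> isum I a w \<in> pos_hull S"
  by (rule isum_closed[where P="\<lambda>t. t \<ge> 0"], auto intro: pos_hull_zero pos_hull_add pos_hull_smul)

lemma pos_hull_trans: "S \<subseteq> pos_hull T \<Longrightarrow> pos_hull S \<subseteq> pos_hull T"
  unfolding pos_hull_isum_def[of S]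
  by (auto intro!: pos_hull_isum)

lemma pos_hull_mono: "S \<subseteq> T \<Longrightarrow> pos_hull S \<subseteq> pos_hull T"
  by (rule pos_hull_trans, auto intro: pos_hull_base)

lemma pos_hull_fin: assumes "finite S" "x \<in> pos_hull S"
  shows "\<exists>c. (\<forall>v\<in>S. c v \<ge> 0) \<and> x = isum S c (\<lambda>v. v)"
proof -
  obtain T c where 1: "finite T" "T \<subseteq> S" "\<forall>v\<in>T. c v \<ge> 0" "x = isum T c (\<lambda>v. v)"
    using assms(2) unfolding pos_hull_isum_def by auto
  show ?thesis using 1 isum_extend[OF assms(1) 1(2)] by (auto intro!: exI[of _ "\<lambda>j. if j \<in> T then c j else 0"])
qed

lemma pos_hull_fin_iff: "finite S \<Longrightarrow> x \<in> pos_hull S \<longleftrightarrow> (\<exists>c. (\<forall>v\<in>S. c v \<ge> 0) \<and> x = isum S c (\<lambda>v. v))"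
  using pos_hull_fin[of S x] pos_hull_isum[of S _ "\<lambda>v. v"] pos_hull_base by auto

lemma lin_span_zero: "vzero \<in> lin_span S"
proof -
  have "vzero = isum {} (\<lambda>_. 0) (\<lambda>v. v)" by simp
  then show ?thesis unfolding lin_span_isum_def by blast
qed

lemma lin_span_add: assumes "x \<in> lin_span S" "y \<in> lin_span S" shows "(\<lambda>i. x i + y i) \<in> lin_span S"
proof -
  obtain T1 c1 where 1: "finite T1" "T1 \<subseteq> S" "x = isum T1 c1 (\<lambda>v. v)"
    using assms(1) unfolding lin_span_isum_def by auto
  obtain T2 c2 where 2: "finite T2" "T2 \<subseteq> S" "y = isum T2 c2 (\<lambda>v. v)"
    using assms(2) unfolding lin_span_isum_def by auto
  have fin: "finite (T1 \<union> T2)" using 1 2 by auto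
  have "(\<lambda>i. x i + y i) = isum (T1 \<union> T2) (\<lambda>v. (if v \<in> T1 then c1 v else 0) + (if v \<in> T2 then c2 v else 0)) (\<lambda>v. v)"
    unfolding 1(3) 2(3) by (rule isum_union_add; fact)
  then show ?thesis unfolding lin_span_isum_def using 1 2 fin by (auto intro!: exI[of _ "T1 \<union> T2"])
qed

lemma lin_span_smul: assumes "x \<in> lin_span S" shows "smul t x \<in> lin_span S"
proof -
  obtain T c where 1: "finite T" "T \<subseteq> S" "x = isum T c (\<lambda>v. v)"
    using assms(1) unfolding lin_span_isum_def by auto
  show ?thesis unfolding lin_span_isum_def 1(3) isum_smul using 1
    by (auto intro!: exI[of _ T])
qed

lemma lin_span_base: "x \<in> S \<Longrightarrow> x \<in> lin_span S"
  unfolding lin_span_isum_def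
  by (rule CollectI, rule exI[of _ "{x}"], rule exI[of _ "\<lambda>_. 1"], auto simp: isum_def)

lemma lin_span_isum: "finite I \<Longrightarrow> (\<And>j. j \<in> I \<Longrightarrow> w j \<in> lin_span S)
   \<Longrightarrow> isum I a w \<in> lin_span S"
  by (rule isum_closed[where P="\<lambda>t. True"], auto intro: lin_span_zero lin_span_add lin_span_smul)

lemma lin_span_trans: "S \<subseteq> lin_span T \<Longrightarrow> lin_span S \<subseteq> lin_span T"
  unfolding lin_span_isum_def[of S]
  by (auto intro!: lin_span_isum)

lemma lin_span_fin: assumes "finite S" "x \<in> lin_span S"
  shows "\<exists>c. x = isum S c (\<lambda>v. v)"
proof -
  obtain T c where 1: "finite T" "T \<subseteq> S" "x = isum T c (\<lambda>v. v)"
    using assms(2) unfolding lin_span_isum_def by auto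
  show ?thesis using 1 isum_extend[OF assms(1) 1(2)] by (auto intro!: exI[of _ "\<lambda>j. if j \<in> T then c j else 0"])
qed

lemma int_span_zero: "vzero \<in> int_span S"
proof -
  have "vzero = isum {} (\<lambda>_. 0) (\<lambda>v. v)" by simp
  then show ?thesis unfolding int_span_isum_def by blast
qed

lemma int_span_add: assumes "x \<in> int_span S" "y \<in> int_span S" shows "(\<lambda>i. x i + y i) \<in> int_span S"
proof -
  obtain T1 c1 where 1: "finite T1" "T1 \<subseteq> S" "\<forall>v\<in>T1. c1 v \<in> \<int>" "x = isum T1 c1 (\<lambda>v. v)"
    using assms(1) unfolding int_span_isum_def by auto
  obtain T2 c2 where 2: "finite T2" "T2 \<subseteq> S" "\<forall>v\<in>T2. c2 v \<in> \<int>" "y = isum T2 c2 (\<lambda>v. v)"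
    using assms(2) unfolding int_span_isum_def by auto
  have fin: "finite (T1 \<union> T2)" using 1 2 by auto
  have "(\<lambda>i. x i + y i) = isum (T1 \<union> T2) (\<lambda>v. (if v \<in> T1 then c1 v else 0) + (if v \<in> T2 then c2 v else 0)) (\<lambda>v. v)"
    unfolding 1(4) 2(4) by (rule isum_union_add; fact)
  then show ?thesis unfolding int_span_isum_def using 1 2 fin by (auto intro!: exI[of _ "T1 \<union> T2"])
qed

lemma int_span_smul: assumes "x \<in> int_span S" "t \<in> \<int>" shows "smul t x \<in> int_span S"
proof -
  obtain T c where 1: "finite T" "T \<subseteq> S" "\<forall>v\<in>T. c v \<in> \<int>" "x = isum T c (\<lambda>v. v)"
    using assms(1) unfolding int_span_isum_def by auto
  show ?thesis unfolding int_span_isum_def 1(4) isum_smul using 1 assms(2)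
    by (auto intro!: exI[of _ T])
qed

lemma int_span_base: "x \<in> S \<Longrightarrow> x \<in> int_span S"
  unfolding int_span_isum_def
  by (rule CollectI, rule exI[of _ "{x}"], rule exI[of _ "\<lambda>_. 1"], auto simp: isum_def)

lemma int_span_isum: "finite I \<Longrightarrow> (\<And>j. j \<in> I \<Longrightarrow> a j \<in> \<int>) \<Longrightarrow> (\<And>j. j \<in> I \<Longrightarrow> w j \<in> int_span S)
   \<Longrightarrow> isum I a w \<in> int_span S"
  by (rule isum_closed[where P="\<lambda>t. t \<in> \<int>"], auto intro: int_span_zero int_span_add int_span_smul)

lemma lin_indep_isum_def: "lin_indep S \<longleftrightarrow> (\<forall>T c. finite T \<and> T \<subseteq> S \<and> isum T c (\<lambda>v. v) = vzero \<longrightarrow> (\<forall>v\<in>T. c v = 0))"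
  unfolding lin_indep_def isum_def by simp

lemma lin_indep_unique: assumes "lin_indep S" "finite S" "isum S a (\<lambda>v. v) = isum S b (\<lambda>v. v)" "x \<in> S"
  shows "a x = b x"
proof -
  have "isum S (\<lambda>j. a j - b j) (\<lambda>v. v) = vzero"
    using assms(3) isum_diff[of S a "\<lambda>v. v" b] by (metis diff_self)
  then show ?thesis using assms unfolding lin_indep_isum_def by fastforce
qed

lemma lin_indep_idx: assumes "lin_indep (w ` I)" "inj_on w I" "finite I"
   "isum I a w = isum I b w" "j \<in> I" shows "a j = b j"
proof -
  let ?f = "the_inv_into I w"
  have eq: "isum (w ` I) (a \<circ> ?f) (\<lambda>v. v) = isum (w ` I) (b \<circ> ?f) (\<lambda>v. v)"
    using assms(2,4) by (simp add: isum_reindex the_inv_into_f_f comp_def cong: isum_cong)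
  have "(a \<circ> ?f) (w j) = (b \<circ> ?f) (w j)"
    using lin_indep_unique[OF assms(1) _ eq] assms(3,5) by blast
  then show ?thesis using assms(2,5) by (simp add: the_inv_into_f_f)
qed



definition prim :: "nat \<Rightarrow> vec \<Rightarrow> bool" where
  "prim d v \<longleftrightarrow> (\<forall>t. 0 < t \<and> t < 1 \<longrightarrow> smul t v \<notin> lattice d)"

lemma ext_gens_prim: "ext_gens d C = {v \<in> lattice d. extreme_ray C v \<and> prim d v}"
  unfolding ext_gens_def prim_def by simp

lemma smul_smul[simp]: "smul s (smul t v) = smul (s * t) v"
  by (simp add: smul_def mult.assoc)

lemma smul_one[simp]: "smul 1 v = v"
  by (simp add: smul_def)

lemma smul_zero_vec[simp]: "smul t vzero = vzero" and smul_zero_sc[simp]: "smul 0 v = vzero"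
  by (auto simp: smul_def)

lemma smul_apply: "smul t v i = t * v i"
  by (simp add: smul_def)

lemma lattice_add: "x \<in> lattice d \<Longrightarrow> y \<in> lattice d \<Longrightarrow> (\<lambda>i. x i + y i) \<in> lattice d"
  unfolding lattice_def space_def by auto

lemma lattice_diff: "x \<in> lattice d \<Longrightarrow> y \<in> lattice d \<Longrightarrow> (\<lambda>i. x i - y i) \<in> lattice d"
  unfolding lattice_def space_def by auto

lemma lattice_smul_int: "x \<in> lattice d \<Longrightarrow> k \<in> \<int> \<Longrightarrow> smul k x \<in> lattice d"
  unfolding lattice_def space_def smul_def by auto

lemma lattice_zero: "vzero \<in> lattice d"
  unfolding lattice_def space_def by auto

lemma prim_int: assumes "v \<in> lattice d" "prim d v" "smul t v \<in> lattice d" shows "t \<in> \<int>"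
proof (rule ccontr)
  assume nt: "t \<notin> \<int>"
  let ?r = "t - of_int \<lfloor>t\<rfloor>"
  have "?r \<noteq> 0" using nt by (metis Ints_of_int eq_iff_diff_eq_0)
  then have r0: "0 < ?r" by linarith
  have r1: "?r < 1" by linarith
  have "smul ?r v = (\<lambda>i. smul t v i - smul (of_int \<lfloor>t\<rfloor>) v i)"
    by (auto simp: smul_def algebra_simps)
  also have "\<dots> \<in> lattice d" by (rule lattice_diff[OF assms(3) lattice_smul_int[OF assms(1)]]) auto
  finally show False using assms(2) r0 r1 unfolding prim_def by blast
qed

lemma prim_eq: assumes "u \<in> lattice d" "q \<in> lattice d" "prim d u" "prim d q" "u = smul r q" "r > 0"
  shows "u = q"
proof -
  have "r = 1"
  proof (rule ccontr)
    assume "r \<noteq> 1"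
    then consider "r < 1" | "r > 1" by linarith
    then show False
    proof cases
      case 1 then show ?thesis using assms unfolding prim_def by blast
    next
      case 2
      have "smul (1/r) u = q" using assms(5,6) by simp
      moreover have "0 < 1/r" "1/r < 1" using 2 by auto
      ultimately show ?thesis using assms(2,3) unfolding prim_def by metis
    qed
  qed
  then show ?thesis using assms(5) by simp
qed

lemma prim_exists: assumes "v \<in> lattice d" "v \<noteq> vzero"
  shows "\<exists>t>0. smul t v \<in> lattice d \<and> prim d (smul t v)"
proof -
  obtain i where vi: "v i \<noteq> 0" using assms(2) by auto
  have vint: "v i \<in> \<int>" using assms(1) unfolding lattice_def by auto
  define A where "A = {t. 0 < t \<and> t \<le> 1 \<and> smul t v \<in> lattice d}"
  have "A \<subseteq> (\<lambda>k. real_of_int k / \<bar>v i\<bar>) ` {- \<lceil>\<bar>v i\<bar>\<rceil> .. \<lceil>\<bar>v i\<bar>\<rceil>}"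
  proof
    fix t assume "t \<in> A"
    then have t: "0 < t" "t \<le> 1" "smul t v \<in> lattice d" unfolding A_def by auto
    then have "t * v i \<in> \<int>" unfolding lattice_def smul_def by auto
    then obtain k where k: "t * v i = of_int k" by (auto elim: Ints_cases)
    have "\<bar>t * v i\<bar> \<le> \<bar>v i\<bar>" using t by (simp add: abs_mult mult_left_le_one_le)
    then have "of_int \<bar>k\<bar> \<le> \<bar>v i\<bar>" using k by simp
    also have "\<dots> \<le> of_int \<lceil>\<bar>v i\<bar>\<rceil>" by (rule le_of_int_ceiling)
    finally have kb: "\<bar>k\<bar> \<le> \<lceil>\<bar>v i\<bar>\<rceil>" by linarith
    have t_eq: "t = of_int k / v i" using k vi by (simp add: field_simps)
    show "t \<in> (\<lambda>k. real_of_int k / \<bar>v i\<bar>) ` {- \<lceil>\<bar>v i\<bar>\<rceil> .. \<lceil>\<bar>v i\<bar>\<rceil>}"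
    proof (cases "0 < v i")
      case True
      then have "t = of_int k / \<bar>v i\<bar>" using t_eq by simp
      then show ?thesis using kb by (intro image_eqI[of _ _ k]) (auto simp: abs_le_iff)
    next
      case False
      then have "t = of_int (-k) / \<bar>v i\<bar>" using t_eq vi by simp
      then show ?thesis using kb by (intro image_eqI[of _ _ "-k"]) (auto simp: abs_le_iff)
    qed
  qed
  then have finA: "finite A" by (rule finite_subset) auto
  have "1 \<in> A" unfolding A_def using assms(1) by simp
  then have ne: "A \<noteq> {}" by auto
  define t where "t = Min A"
  have tA: "t \<in> A" unfolding t_def using finA ne by (rule Min_in)
  have tmin: "\<And>s. s \<in> A \<Longrightarrow> t \<le> s" unfolding t_def using finA by auto
  have "prim d (smul t v)"
    unfolding prim_def
  proof (intro allI impI notI)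
    fix r assume r: "0 < r \<and> r < 1" "smul r (smul t v) \<in> lattice d"
    then have "r * t \<in> A" using tA unfolding A_def by (auto simp: mult_le_one mult_pos_pos)
    then have "t \<le> r * t" by (rule tmin)
    moreover have "r * t < t" using r tA unfolding A_def by auto
    ultimately show False by simp
  qed
  then show ?thesis using tA unfolding A_def by auto
qed

lemma pointed_sum: assumes "rational_cone d C" "x \<in> C" "y \<in> C" "(\<lambda>i. x i + y i) = vzero"
  shows "x = vzero"
proof -
  have "y = smul (-1) x" using assms(4) by (auto simp: smul_def fun_eq_iff dest: fun_cong) (metis fun_cong add_eq_0_iff)
  then show ?thesis using assms unfolding rational_cone_def by auto
qed

lemma rc_pos_hull: "rational_cone d C \<Longrightarrow> \<exists>S. finite S \<and> S \<subseteq> lattice d \<and> C = pos_hull S"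
  unfolding rational_cone_def by auto

lemma rc_add: "rational_cone d C \<Longrightarrow> x \<in> C \<Longrightarrow> y \<in> C \<Longrightarrow> (\<lambda>i. x i + y i) \<in> C"
  using rc_pos_hull pos_hull_add by blast

lemma rc_smul: "rational_cone d C \<Longrightarrow> x \<in> C \<Longrightarrow> t \<ge> 0 \<Longrightarrow> smul t x \<in> C"
  using rc_pos_hull pos_hull_smul by blast

lemma rc_zero: "rational_cone d C \<Longrightarrow> vzero \<in> C"
  using rc_pos_hull pos_hull_zero by blast

lemma ext_decomp:
  assumes ext: "extreme_ray C u" and addC: "\<And>x y. x \<in> C \<Longrightarrow> y \<in> C \<Longrightarrow> (\<lambda>i. x i + y i) \<in> C"
    and zC: "vzero \<in> C"
    and "finite I" "\<And>j. j \<in> I \<Longrightarrow> f j \<in> C" "(\<lambda>i. \<Sum>j\<in>I. f j i) = smul t u" "t \<ge> 0"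
  shows "\<forall>j\<in>I. \<exists>s\<ge>0. f j = smul s u"
  using assms(4-7)
proof (induction I arbitrary: t rule: finite_induct)
  case empty then show ?case by simp
next
  case (insert j I)
  have sC: "(\<lambda>i. \<Sum>j\<in>I. f j i) \<in> C"
  proof -
    have "isum I (\<lambda>_. 1) f \<in> C"
      by (rule isum_closed[where P="\<lambda>t. t = 1" and K=C]) (use insert zC addC in auto)
    then show ?thesis by (simp add: isum_def)
  qed
  have eq: "(\<lambda>i. f j i + (\<Sum>j\<in>I. f j i)) = smul t u" using insert(1,2,5) by (simp add: fun_eq_iff)
  have fj: "f j \<in> C" using insert by simp
  have H: "\<And>x y. x \<in> C \<Longrightarrow> y \<in> C \<Longrightarrow> (\<exists>t\<ge>0. (\<lambda>i. x i + y i) = smul t u) \<Longrightarrow>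
         (\<exists>s\<ge>0. x = smul s u) \<and> (\<exists>s\<ge>0. y = smul s u)" using ext unfolding extreme_ray_def by blast
  have "(\<exists>s\<ge>0. f j = smul s u) \<and> (\<exists>s\<ge>0. (\<lambda>i. \<Sum>j\<in>I. f j i) = smul s u)"
    by (rule H[OF fj sC]) (use eq insert.prems(3) in blast)
  then obtain s0 s1 where s0: "s0 \<ge> 0" "f j = smul s0 u" and s1: "s1 \<ge> 0" "(\<lambda>i. \<Sum>j\<in>I. f j i) = smul s1 u"
    by blast
  have "\<forall>j\<in>I. \<exists>s\<ge>0. f j = smul s u"
    by (rule insert.IH[OF _ s1(2) s1(1)]) (use insert.prems in simp)
  then show ?case using s0 by blast
qed

lemma smul_eq_nonzero: assumes "smul s u = smul r u" "u \<noteq> vzero" shows "s = r"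
proof -
  obtain i where "u i \<noteq> 0" using assms(2) by auto
  moreover have "s * u i = r * u i" using fun_cong[OF assms(1), of i] by (simp add: smul_def)
  ultimately show ?thesis by simp
qed

lemma ext_single:
  assumes ext: "extreme_ray C u" and rc: "rational_cone d C"
    and "finite I" "\<And>j. j \<in> I \<Longrightarrow> w j \<in> C" "\<And>j. j \<in> I \<Longrightarrow> a j \<ge> 0" "isum I a w = u"
  shows "\<exists>j\<in>I. \<exists>r>0. u = smul r (w j)"
proof -
  have "\<forall>j\<in>I. \<exists>s\<ge>0. smul (a j) (w j) = smul s u"
    by (rule ext_decomp[OF ext rc_add[OF rc] rc_zero[OF rc] assms(3), of _ 1])
       (use assms rc_smul[OF rc] in \<open>auto simp: smul_def isum_def\<close>)
  then obtain s where s: "\<And>j. j \<in> I \<Longrightarrow> s j \<ge> 0 \<and> smul (a j) (w j) = smul (s j) u" by metis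
  have u0: "u \<noteq> vzero" using ext unfolding extreme_ray_def by auto
  have "u = (\<lambda>i. \<Sum>j\<in>I. smul (a j) (w j) i)" using assms(6) by (auto simp: isum_def smul_def)
  also have "\<dots> = (\<lambda>i. \<Sum>j\<in>I. s j * u i)"
  proof (intro HOL.ext sum.cong refl)
    fix i j assume "j \<in> I"
    then have "smul (a j) (w j) i = smul (s j) u i" using s by simp
    then show "smul (a j) (w j) i = s j * u i" by (simp add: smul_apply)
  qed
  also have "\<dots> = smul (\<Sum>j\<in>I. s j) u" by (auto simp: smul_def sum_distrib_right)
  finally have "smul 1 u = smul (\<Sum>j\<in>I. s j) u" by simp
  then have "(\<Sum>j\<in>I. s j) = 1" using smul_eq_nonzero u0 by metis
  then obtain j where j: "j \<in> I" "s j > 0"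
  proof -
    assume r: "\<And>j. j \<in> I \<Longrightarrow> 0 < s j \<Longrightarrow> thesis"
    show thesis
    proof (rule ccontr)
      assume "\<not> thesis"
      then have "\<And>j. j \<in> I \<Longrightarrow> s j \<le> 0" using r by force
      then have "(\<Sum>j\<in>I. s j) \<le> 0" by (rule sum_nonpos)
      then show False using \<open>(\<Sum>j\<in>I. s j) = 1\<close> by simp
    qed
  qed
  then have sj: "smul (a j) (w j) = smul (s j) u" using s by blast
  have "a j \<noteq> 0"
  proof
    assume "a j = 0"
    then have "smul (s j) u = smul 0 u" using sj by simp
    then have "s j = 0" using smul_eq_nonzero u0 by blast
    then show False using j by simp
  qed
  then have aj: "a j > 0" using assms(5) j by (simp add: order_less_le)
  have "smul (1 / s j) (smul (a j) (w j)) = smul (1 / s j) (smul (s j) u)" using sj by simp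
  then have "u = smul (a j / s j) (w j)" using j by simp
  then show ?thesis using j aj by (intro bexI[of _ j] exI[of _ "a j / s j"]) auto
qed



lemma ext_ray_smul: assumes "extreme_ray C s" "t > 0" "smul t s \<in> C" shows "extreme_ray C (smul t s)"
proof -
  have s0: "s \<noteq> vzero" using assms(1) unfolding extreme_ray_def by auto
  have "smul t s \<noteq> vzero"
  proof
    assume "smul t s = vzero"
    then have "smul t s = smul 0 s" by simp
    then show False using smul_eq_nonzero[OF _ s0] assms(2) by (metis less_irrefl)
  qed
  moreover have "(\<exists>s'\<ge>0. x = smul s' (smul t s)) \<and> (\<exists>s'\<ge>0. y = smul s' (smul t s))"
    if "x \<in> C" "y \<in> C" "r \<ge> 0" "(\<lambda>i. x i + y i) = smul r (smul t s)" for x y r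
  proof -
    have "(\<exists>s'\<ge>0. x = smul s' s) \<and> (\<exists>s'\<ge>0. y = smul s' s)"
      using assms(1) that unfolding extreme_ray_def by (metis smul_smul zero_le_mult_iff assms(2) less_eq_real_def)
    then obtain a b where ab: "a \<ge> 0" "x = smul a s" "b \<ge> 0" "y = smul b s" by blast
    have "x = smul (a / t) (smul t s)" "y = smul (b / t) (smul t s)" using ab assms(2) by auto
    then show ?thesis using ab assms(2) by (metis divide_nonneg_pos)
  qed
  ultimately show ?thesis using assms(3) unfolding extreme_ray_def by blast
qed

lemma min_gen_extreme:
  assumes rc: "rational_cone d C" and fin: "finite S0" and C: "C = pos_hull S0"
    and s: "s \<in> S0" and notin: "s \<notin> pos_hull (S0 - {s})"
    and x: "x \<in> C" and y: "y \<in> C" and t: "t \<ge> 0" and sum: "(\<lambda>i. x i + y i) = smul t s"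
  shows "\<exists>r\<ge>0. x = smul r s"
proof -
  let ?R = "S0 - {s}"
  have finR: "finite ?R" using fin by simp
  have S0: "S0 = insert s ?R" using s by auto
  obtain a where a: "\<forall>v\<in>S0. a v \<ge> 0" "x = isum S0 a (\<lambda>v. v)" using pos_hull_fin[OF fin] x C by blast
  obtain b where b: "\<forall>v\<in>S0. b v \<ge> 0" "y = isum S0 b (\<lambda>v. v)" using pos_hull_fin[OF fin] y C by blast
  have xa: "x = (\<lambda>i. a s * s i + isum ?R a (\<lambda>v. v) i)" using a(2) S0 isum_insert[OF finR, of s a "\<lambda>v. v"] by simp
  have yb: "y = (\<lambda>i. b s * s i + isum ?R b (\<lambda>v. v) i)" using b(2) S0 isum_insert[OF finR, of s b "\<lambda>v. v"] by simp
  let ?c = "a s + b s"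
  let ?z = "isum ?R (\<lambda>v. a v + b v) (\<lambda>v. v)"
  have zdef: "?z = (\<lambda>i. isum ?R a (\<lambda>v. v) i + isum ?R b (\<lambda>v. v) i)" by (simp add: isum_add)
  have key: "\<And>i. ?z i + ?c * s i = t * s i"
    using fun_cong[OF sum] unfolding xa yb zdef by (simp add: smul_def algebra_simps)
  have zC: "?z \<in> C" unfolding C
    by (rule pos_hull_isum[OF finR]) (use a b in \<open>auto intro: pos_hull_base\<close>)
  show ?thesis
  proof (cases "t > ?c")
    case True
    have "s = isum ?R (\<lambda>v. (a v + b v) / (t - ?c)) (\<lambda>v. v)"
    proof
      fix i
      have "isum ?R (\<lambda>v. (a v + b v) / (t - ?c)) (\<lambda>v. v) i = ?z i / (t - ?c)"
        by (simp add: isum_apply sum_divide_distrib)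
      also have "\<dots> = s i" using key[of i] True by (simp add: field_simps)
      finally show "s i = isum ?R (\<lambda>v. (a v + b v) / (t - ?c)) (\<lambda>v. v) i" by simp
    qed
    moreover have "isum ?R (\<lambda>v. (a v + b v) / (t - ?c)) (\<lambda>v. v) \<in> pos_hull ?R"
      by (rule pos_hull_isum[OF finR]) (use a b True in \<open>auto intro: pos_hull_base\<close>)
    ultimately show ?thesis using notin by simp
  next
    case False
    have "smul (?c - t) s \<in> C" using False s unfolding C by (auto intro: pos_hull_smul pos_hull_base)
    moreover have "(\<lambda>i. ?z i + smul (?c - t) s i) = vzero" using key by (auto simp: smul_def algebra_simps)
    ultimately have "?z = vzero" using pointed_sum[OF rc zC] by blast
    then have z0: "(\<lambda>i. isum ?R a (\<lambda>v. v) i + isum ?R b (\<lambda>v. v) i) = vzero" using zdef by simp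
    have "isum ?R a (\<lambda>v. v) \<in> C" unfolding C
      by (rule pos_hull_isum[OF finR]) (use a in \<open>auto intro: pos_hull_base\<close>)
    moreover have "isum ?R b (\<lambda>v. v) \<in> C" unfolding C
      by (rule pos_hull_isum[OF finR]) (use b in \<open>auto intro: pos_hull_base\<close>)
    ultimately have "isum ?R a (\<lambda>v. v) = vzero" using pointed_sum[OF rc] z0 by blast
    then have "x = smul (a s) s" unfolding xa by (simp add: smul_def)
    then show ?thesis using a s by blast
  qed
qed

lemma cone_ext_gen:
  assumes rc: "rational_cone d C"
  shows "finite (ext_gens d C) \<and> C = pos_hull (ext_gens d C)"
proof -
  obtain S where S: "finite S" "S \<subseteq> lattice d" "C = pos_hull S" using rc_pos_hull[OF rc] by blast
  let ?P = "\<lambda>S0. S0 \<subseteq> S \<and> pos_hull S0 = C"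
  obtain S0 where S0: "?P S0" and S0min: "\<And>S1. ?P S1 \<Longrightarrow> card S0 \<le> card S1"
    using ex_has_least_nat[of ?P S card] S by auto
  have fin0: "finite S0" using S0 S(1) finite_subset by blast
  have C0: "C = pos_hull S0" using S0 by simp
  have notin: "s \<notin> pos_hull (S0 - {s})" if s: "s \<in> S0" for s
  proof
    assume sin: "s \<in> pos_hull (S0 - {s})"
    have sub: "S0 \<subseteq> pos_hull (S0 - {s})"
    proof
      fix x assume "x \<in> S0"
      then show "x \<in> pos_hull (S0 - {s})"
      proof (cases "x = s")
        case True then show ?thesis using sin by simp
      next
        case False then show ?thesis using \<open>x \<in> S0\<close> by (intro pos_hull_base) simp
      qed
    qed
    have h1: "pos_hull S0 \<subseteq> pos_hull (S0 - {s})" using sub by (rule pos_hull_trans)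
    have h2: "pos_hull (S0 - {s}) \<subseteq> pos_hull S0" by (rule pos_hull_mono) (rule Diff_subset)
    have "pos_hull (S0 - {s}) = C" using h1 h2 C0 by (rule_tac subset_antisym) simp_all
    moreover have "S0 - {s} \<subseteq> S" using S0 by blast
    ultimately have "card S0 \<le> card (S0 - {s})" using S0min by blast
    moreover have "card (S0 - {s}) < card S0" using s fin0 by (rule_tac card_Diff1_less)
    ultimately show False by simp
  qed
  have lat0: "S0 \<subseteq> lattice d" using S0 S(2) by auto
  have extr: "extreme_ray C s" if s: "s \<in> S0" for s
  proof -
    have "s \<in> C" using s C0 pos_hull_base by blast
    moreover have "s \<noteq> vzero" using notin[OF s] pos_hull_zero by (metis DiffI singletonD)
    moreover have "(\<exists>r\<ge>0. x = smul r s) \<and> (\<exists>r\<ge>0. y = smul r s)"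
      if "x \<in> C" "y \<in> C" "t \<ge> 0" "(\<lambda>i. x i + y i) = smul t s" for x y t
    proof
      show "\<exists>r\<ge>0. x = smul r s"
        by (rule min_gen_extreme[OF rc fin0 C0 s notin[OF s]]) (use that in auto)
      have "(\<lambda>i. y i + x i) = smul t s" using that(4) by (simp add: add.commute)
      then show "\<exists>r\<ge>0. y = smul r s"
        by (intro min_gen_extreme[OF rc fin0 C0 s notin[OF s]]) (use that in auto)
    qed
    ultimately show ?thesis unfolding extreme_ray_def by blast
  qed
  have "\<forall>s\<in>S0. \<exists>t>0. smul t s \<in> lattice d \<and> prim d (smul t s)"
  proof
    fix s assume s: "s \<in> S0"
    have "s \<noteq> vzero" using notin[OF s] pos_hull_zero by (metis DiffI singletonD)
    then show "\<exists>t>0. smul t s \<in> lattice d \<and> prim d (smul t s)" using prim_exists lat0 s by blast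
  qed
  then obtain tt where tt: "\<And>s. s \<in> S0 \<Longrightarrow> tt s > 0 \<and> smul (tt s) s \<in> lattice d \<and> prim d (smul (tt s) s)"
    by metis
  define p where "p s = smul (tt s) s" for s
  have pext: "p s \<in> ext_gens d C" if s: "s \<in> S0" for s
  proof -
    have "p s \<in> C" unfolding p_def using s tt C0 by (auto intro: pos_hull_smul pos_hull_base less_imp_le)
    then have "extreme_ray C (p s)" unfolding p_def using ext_ray_smul extr s tt unfolding p_def by blast
    then show ?thesis unfolding ext_gens_prim p_def using tt s by auto
  qed
  have extC: "ext_gens d C \<subseteq> C" unfolding ext_gens_def extreme_ray_def by auto
  have "S0 \<subseteq> pos_hull (p ` S0)"
  proof
    fix s assume s: "s \<in> S0"
    have "s = smul (1 / tt s) (p s)" unfolding p_def using tt[OF s] by simp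
    moreover have "p s \<in> pos_hull (p ` S0)" using s by (auto intro: pos_hull_base)
    moreover have "1 / tt s \<ge> 0" using tt[OF s] by simp
    ultimately show "s \<in> pos_hull (p ` S0)" using pos_hull_smul by metis
  qed
  then have "C \<subseteq> pos_hull (p ` S0)" using C0 pos_hull_trans by blast
  also have "\<dots> \<subseteq> pos_hull (ext_gens d C)" by (rule pos_hull_mono) (use pext in auto)
  also have "\<dots> \<subseteq> C" using S(3) extC pos_hull_trans by blast
  finally have Ceq: "C = pos_hull (ext_gens d C)" by blast
  have "ext_gens d C \<subseteq> p ` S0"
  proof
    fix u assume u: "u \<in> ext_gens d C"
    have finp: "finite (p ` S0)" using fin0 by simp
    have "u \<in> pos_hull (p ` S0)" using u extC \<open>C \<subseteq> pos_hull (p ` S0)\<close> by blast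
    then obtain c where c: "\<forall>v\<in>p ` S0. c v \<ge> 0" "u = isum (p ` S0) c (\<lambda>v. v)" using pos_hull_fin[OF finp] by blast
    have "\<exists>q\<in>p ` S0. \<exists>r>0. u = smul r q"
      by (rule ext_single[of C u d]) (use u c pext extC rc finp in \<open>auto simp: ext_gens_def\<close>)
    then obtain q r where q: "q \<in> p ` S0" "r > 0" "u = smul r q" by blast
    have "u = q"
      by (rule prim_eq[OF _ _ _ _ q(3) q(2)]) (use u pext q(1) in \<open>auto simp: ext_gens_prim\<close>)
    then show "u \<in> p ` S0" using q by simp
  qed
  then have "finite (ext_gens d C)" using fin0 finite_subset by blast
  then show ?thesis using Ceq by blast
qed



lemma isum_single: assumes "finite G" "g \<in> G" "\<And>h. h \<in> G \<Longrightarrow> h \<noteq> g \<Longrightarrow> a h = 0"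
  shows "isum G a w = smul (a g) (w g)"
proof -
  have "isum {g} a w = isum G (\<lambda>j. if j \<in> {g} then a j else 0) w"
    by (rule isum_extend) (use assms in auto)
  also have "\<dots> = isum G a w" by (rule isum_cong) (use assms in auto)
  finally show ?thesis by (simp add: isum_def smul_def)
qed

lemma int_span_fin: assumes "finite S" "x \<in> int_span S"
  shows "\<exists>c. (\<forall>v\<in>S. c v \<in> \<int>) \<and> x = isum S c (\<lambda>v. v)"
proof -
  obtain T c where 1: "finite T" "T \<subseteq> S" "\<forall>v\<in>T. c v \<in> \<int>" "x = isum T c (\<lambda>v. v)"
    using assms(2) unfolding int_span_isum_def by auto
  show ?thesis using 1 isum_extend[OF assms(1) 1(2)] by (auto intro!: exI[of _ "\<lambda>j. if j \<in> T then c j else 0"])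
qed

lemma pos_hull_sub_lin_span: "pos_hull S \<subseteq> lin_span S"
  unfolding pos_hull_def lin_span_def by blast

lemma sum_single_coef:
  assumes li: "lin_indep G" and fin: "finite G" and g: "g \<in> G"
    and a: "\<forall>h\<in>G. a h \<ge> 0" and b: "\<forall>h\<in>G. b h \<ge> 0"
    and eq: "(\<lambda>i. isum G a (\<lambda>v. v) i + isum G b (\<lambda>v. v) i) = smul t g"
  shows "(\<forall>h\<in>G. h \<noteq> g \<longrightarrow> a h = 0 \<and> b h = 0) \<and> a g + b g = t"
proof -
  have "isum G (\<lambda>h. a h + b h) (\<lambda>v. v) = isum G (\<lambda>h. if h = g then t else 0) (\<lambda>v. v)"
    using eq isum_add[of G a "\<lambda>v. v" b] isum_single[OF fin g, of "\<lambda>h. if h = g then t else 0" "\<lambda>v. v"]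
    by simp
  then have co: "\<And>h. h \<in> G \<Longrightarrow> a h + b h = (if h = g then t else 0)"
    using lin_indep_unique[OF li fin] by blast
  show ?thesis
  proof (intro conjI ballI impI)
    fix h assume "h \<in> G" "h \<noteq> g"
    then show "a h = 0" "b h = 0" using co[of h] a b by (auto simp: add_nonneg_eq_0_iff)
  next
    show "a g + b g = t" using co[OF g] by simp
  qed
qed

locale simp_gens =
  fixes d :: nat and G :: "vec set"
  assumes fin: "finite G" and lat: "G \<subseteq> lattice d" and li: "lin_indep G"
    and prm: "\<And>g. g \<in> G \<Longrightarrow> prim d g" and nz: "vzero \<notin> G"
begin

abbreviation "D \<equiv> pos_hull G"

lemma coords: "x \<in> D \<Longrightarrow> \<exists>a. (\<forall>v\<in>G. a v \<ge> 0) \<and> x = isum G a (\<lambda>v. v)"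
  using pos_hull_fin[OF fin] by blast

lemma rc: "rational_cone d D"
  unfolding rational_cone_def
proof (intro conjI allI impI)
  show "\<exists>S. finite S \<and> S \<subseteq> lattice d \<and> D = pos_hull S" using fin lat by blast
next
  fix x assume x: "x \<in> D \<and> smul (-1) x \<in> D"
  obtain a where a: "\<forall>v\<in>G. a v \<ge> 0" "x = isum G a (\<lambda>v. v)" using coords x by blast
  obtain b where b: "\<forall>v\<in>G. b v \<ge> 0" "smul (-1) x = isum G b (\<lambda>v. v)" using coords x by blast
  have "(\<lambda>i. isum G a (\<lambda>v. v) i + isum G b (\<lambda>v. v) i) = smul 0 x"
    using a(2) b(2)[symmetric] by (auto simp: smul_def)
  then have "(\<forall>h\<in>G. a h = 0)"
  proof -
    assume e: "(\<lambda>i. isum G a (\<lambda>v. v) i + isum G b (\<lambda>v. v) i) = smul 0 x"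
    have "isum G (\<lambda>h. a h + b h) (\<lambda>v. v) = isum G (\<lambda>h. 0) (\<lambda>v. v)"
      using e isum_add[of G a "\<lambda>v. v" b] by (simp add: isum_def)
    then have "\<And>h. h \<in> G \<Longrightarrow> a h + b h = 0" using lin_indep_unique[OF li fin] by blast
    then show ?thesis using a b by (auto simp: add_nonneg_eq_0_iff)
  qed
  then show "x = vzero" using a(2) by (simp add: isum_def)
qed

lemma G_sub_D: "G \<subseteq> D" using pos_hull_base by blast

lemma G_ext: assumes g: "g \<in> G" shows "g \<in> ext_gens d D"
proof -
  have "extreme_ray D g"
    unfolding extreme_ray_def
  proof (intro conjI ballI impI)
    show "g \<in> D" using g G_sub_D by blast
    show "g \<noteq> vzero" using g nz by auto
  next
    fix x y assume x: "x \<in> D" and y: "y \<in> D" and "\<exists>t\<ge>0. (\<lambda>i. x i + y i) = smul t g"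
    then obtain t where t: "t \<ge> 0" "(\<lambda>i. x i + y i) = smul t g" by blast
    obtain a where a: "\<forall>v\<in>G. a v \<ge> 0" "x = isum G a (\<lambda>v. v)" using coords x by blast
    obtain b where b: "\<forall>v\<in>G. b v \<ge> 0" "y = isum G b (\<lambda>v. v)" using coords y by blast
    have co: "(\<forall>h\<in>G. h \<noteq> g \<longrightarrow> a h = 0 \<and> b h = 0) \<and> a g + b g = t"
      by (rule sum_single_coef[OF li fin g a(1) b(1)]) (use t a b in simp)
    have "x = smul (a g) g" using a(2) isum_single[OF fin g, of a] co by simp
    moreover have "y = smul (b g) g" using b(2) isum_single[OF fin g, of b] co by simp
    ultimately show "\<exists>s\<ge>0. x = smul s g" "\<exists>s\<ge>0. y = smul s g" using a b g by blast+
  qed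
  then show ?thesis unfolding ext_gens_prim using g lat prm by auto
qed

lemma ext_eq: "ext_gens d D = G"
proof
  show "G \<subseteq> ext_gens d D" using G_ext by blast
next
  show "ext_gens d D \<subseteq> G"
  proof
    fix u assume u: "u \<in> ext_gens d D"
    then have uD: "u \<in> D" unfolding ext_gens_def extreme_ray_def by auto
    obtain c where c: "\<forall>v\<in>G. c v \<ge> 0" "u = isum G c (\<lambda>v. v)" using coords uD by blast
    have "\<exists>g\<in>G. \<exists>r>0. u = smul r g"
      by (rule ext_single[of D u d]) (use u c rc fin G_sub_D in \<open>auto simp: ext_gens_def\<close>)
    then obtain g r where g: "g \<in> G" "r > 0" "u = smul r g" by blast
    have "u = g"
      by (rule prim_eq[OF _ _ _ _ g(3) g(2)]) (use u g(1) lat prm in \<open>auto simp: ext_gens_prim\<close>)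
    then show "u \<in> G" using g by simp
  qed
qed

lemma simplicial: "simplicial d D"
  unfolding simplicial_def using rc ext_eq li by simp

lemma G_hilb: assumes g: "g \<in> G" shows "g \<in> hilb d D"
proof -
  have gD: "g \<in> D" "g \<in> lattice d" "g \<noteq> vzero" using g G_sub_D lat nz by auto
  have "\<not> (\<exists>y\<in>D \<inter> lattice d. \<exists>z\<in>D \<inter> lattice d. y \<noteq> vzero \<and> z \<noteq> vzero \<and> g = (\<lambda>i. y i + z i))"
  proof
    assume "\<exists>y\<in>D \<inter> lattice d. \<exists>z\<in>D \<inter> lattice d. y \<noteq> vzero \<and> z \<noteq> vzero \<and> g = (\<lambda>i. y i + z i)"
    then obtain y z where yz: "y \<in> D" "y \<in> lattice d" "z \<in> D" "y \<noteq> vzero" "z \<noteq> vzero" "g = (\<lambda>i. y i + z i)"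
      by blast
    obtain a where a: "\<forall>v\<in>G. a v \<ge> 0" "y = isum G a (\<lambda>v. v)" using coords yz by blast
    obtain b where b: "\<forall>v\<in>G. b v \<ge> 0" "z = isum G b (\<lambda>v. v)" using coords yz by blast
    have co: "(\<forall>h\<in>G. h \<noteq> g \<longrightarrow> a h = 0 \<and> b h = 0) \<and> a g + b g = 1"
      by (rule sum_single_coef[OF li fin g a(1) b(1)]) (use yz a b in simp)
    have y: "y = smul (a g) g" using a(2) isum_single[OF fin g, of a] co by simp
    have z: "z = smul (b g) g" using b(2) isum_single[OF fin g, of b] co by simp
    have "a g \<noteq> 0" using y yz(4) by auto
    then have "a g > 0" using a g by (simp add: order_less_le)
    have "b g \<noteq> 0" using z yz(5) by auto
    then have "b g > 0" using b g by (simp add: order_less_le)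
    then have "a g < 1" using co by simp
    then show False using prm[OF g] \<open>a g > 0\<close> y yz(2) unfolding prim_def by blast
  qed
  then show ?thesis unfolding hilb_def using gD by blast
qed

context
  assumes uni: "lattice d \<inter> lin_span G \<subseteq> int_span G"
begin

lemma unimodular: "unimodular d D"
  unfolding unimodular_def using simplicial uni ext_eq by simp

lemma hilb_sub: "hilb d D \<subseteq> G"
proof
  fix x assume x: "x \<in> hilb d D"
  then have xD: "x \<in> D" "x \<in> lattice d" "x \<noteq> vzero" unfolding hilb_def by auto
  have irr: "\<not> (\<exists>y\<in>D \<inter> lattice d. \<exists>z\<in>D \<inter> lattice d. y \<noteq> vzero \<and> z \<noteq> vzero \<and> x = (\<lambda>i. y i + z i))"
    using x unfolding hilb_def by blast
  obtain a where a: "\<forall>v\<in>G. a v \<ge> 0" "x = isum G a (\<lambda>v. v)" using coords xD by blast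
  have "x \<in> int_span G" using uni xD pos_hull_sub_lin_span by blast
  then obtain n where n: "\<forall>v\<in>G. n v \<in> \<int>" "x = isum G n (\<lambda>v. v)" using int_span_fin[OF fin] by blast
  have an: "\<And>h. h \<in> G \<Longrightarrow> a h = n h" using lin_indep_unique[OF li fin] a(2) n(2) by metis
  obtain g where g: "g \<in> G" "a g \<noteq> 0"
  proof -
    assume r: "\<And>g. g \<in> G \<Longrightarrow> a g \<noteq> 0 \<Longrightarrow> thesis"
    show thesis
    proof (rule ccontr)
      assume "\<not> thesis"
      then have "\<And>g. g \<in> G \<Longrightarrow> a g = 0" using r by blast
      then have "x = vzero" using a(2) by (simp add: isum_def)
      then show False using xD by simp
    qed
  qed
  have ag1: "a g \<ge> 1"
  proof -
    have "a g \<in> \<int>" using an[OF g(1)] n(1) g(1) by simp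
    moreover have "a g > 0" using a g by (simp add: order_less_le)
    ultimately show ?thesis by (metis Ints_cases of_int_0_less_iff of_int_1_le_iff zero_less_imp_eq_int int_one_le_iff_zero_less)
  qed
  show "x \<in> G"
  proof (rule ccontr)
    assume xg: "x \<notin> G"
    let ?z = "(\<lambda>i. x i - g i)"
    have "?z = isum G (\<lambda>h. a h - (if h = g then 1 else 0)) (\<lambda>v. v)"
      using a(2) isum_diff[of G a "\<lambda>v. v" "\<lambda>h. if h = g then 1 else 0"] isum_single[OF fin g(1), of "\<lambda>h. if h = g then 1 else 0" "\<lambda>v. v"]
      by simp
    moreover have "isum G (\<lambda>h. a h - (if h = g then 1 else 0)) (\<lambda>v. v) \<in> D"
      by (rule pos_hull_isum[OF fin]) (use a ag1 in \<open>auto intro: pos_hull_base\<close>)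
    ultimately have zD: "?z \<in> D" by simp
    have zL: "?z \<in> lattice d" using lattice_diff xD g lat by blast
    have z0: "?z \<noteq> vzero"
    proof
      assume "?z = vzero"
      then have "x = g" by (auto simp: fun_eq_iff dest: fun_cong)
      then show False using xg g by simp
    qed
    have "x = (\<lambda>i. g i + ?z i)" by simp
    moreover have "g \<in> D \<inter> lattice d" "g \<noteq> vzero" using g G_sub_D lat nz by auto
    ultimately show False using irr zD zL z0 by blast
  qed
qed

end
end



definition vlin :: "(vec \<Rightarrow> vec) \<Rightarrow> bool" where
  "vlin f \<longleftrightarrow> (\<forall>x y. f (\<lambda>i. x i + y i) = (\<lambda>i. f x i + f y i)) \<and> (\<forall>t x. f (smul t x) = smul t (f x))"

definition lat_iso :: "nat \<Rightarrow> (vec \<Rightarrow> vec) \<Rightarrow> (vec \<Rightarrow> vec) \<Rightarrow> bool" where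
  "lat_iso d U W \<longleftrightarrow> vlin U \<and> vlin W \<and> (\<forall>x\<in>space d. U x \<in> space d) \<and> (\<forall>x\<in>space d. W x \<in> space d)
     \<and> (\<forall>x\<in>lattice d. U x \<in> lattice d) \<and> (\<forall>x\<in>lattice d. W x \<in> lattice d)
     \<and> (\<forall>x\<in>space d. W (U x) = x) \<and> (\<forall>x\<in>space d. U (W x) = x)"

lemma vlin_zero: assumes "vlin f" shows "f vzero = vzero"
proof -
  have "f (smul 0 vzero) = smul 0 (f vzero)" using assms unfolding vlin_def by blast
  then show ?thesis by simp
qed

lemma vlin_isum: assumes "vlin f" "finite I" shows "f (isum I a w) = isum I a (\<lambda>j. f (w j))"
  using assms(2)
proof (induction I rule: finite_induct)
  case empty then show ?case using vlin_zero[OF assms(1)] by simp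
next
  case (insert j I)
  have "isum (insert j I) a w = (\<lambda>i. smul (a j) (w j) i + isum I a w i)"
    using insert by (simp add: isum_insert smul_def)
  then have "f (isum (insert j I) a w) = (\<lambda>i. f (smul (a j) (w j)) i + f (isum I a w) i)"
    using assms(1) unfolding vlin_def by simp
  also have "\<dots> = (\<lambda>i. a j * f (w j) i + isum I a (\<lambda>j. f (w j)) i)"
    using insert assms(1) unfolding vlin_def by (simp add: smul_def)
  also have "\<dots> = isum (insert j I) a (\<lambda>j. f (w j))" using insert by (simp add: isum_insert)
  finally show ?case .
qed

lemma vlin_comp: "vlin f \<Longrightarrow> vlin g \<Longrightarrow> vlin (\<lambda>x. f (g x))"
  unfolding vlin_def by simp

lemma lat_iso_comp: assumes "lat_iso d U W" "lat_iso d U' W'"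
  shows "lat_iso d (\<lambda>x. U' (U x)) (\<lambda>x. W (W' x))"
  using assms unfolding lat_iso_def by (simp add: vlin_comp)

lemma lat_iso_id: "lat_iso d (\<lambda>x. x) (\<lambda>x. x)"
  unfolding lat_iso_def vlin_def by auto

definition sw :: "nat \<Rightarrow> nat \<Rightarrow> nat \<Rightarrow> nat" where
  "sw i j k = (if k = i then j else if k = j then i else k)"

lemma lat_iso_swap: assumes "i < d" "j < d"
  shows "lat_iso d (\<lambda>x k. x (sw i j k)) (\<lambda>x k. x (sw i j k))"
proof -
  have sw2: "sw i j (sw i j k) = k" for k unfolding sw_def by auto
  have swd: "k \<ge> d \<Longrightarrow> sw i j k = k" for k using assms unfolding sw_def by auto
  have swl: "k < d \<Longrightarrow> sw i j k < d" for k using assms unfolding sw_def by auto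
  show ?thesis unfolding lat_iso_def vlin_def lattice_def space_def
    by (auto simp: sw2 swd smul_def)
qed

lemma lat_iso_addm: assumes "i < d" "j < d" "i \<noteq> j" "m \<in> \<int>"
  shows "lat_iso d (\<lambda>x k. if k = i then x i + m * x j else x k) (\<lambda>x k. if k = i then x i - m * x j else x k)"
  using assms unfolding lat_iso_def vlin_def lattice_def space_def
  by (auto simp: smul_def fun_eq_iff algebra_simps)

lemma lat_iso_neg: assumes "i < d"
  shows "lat_iso d (\<lambda>x k. if k = i then - x k else x k) (\<lambda>x k. if k = i then - x k else x k)"
  using assms unfolding lat_iso_def vlin_def lattice_def space_def
  by (auto simp: smul_def fun_eq_iff algebra_simps)

definition ev :: "nat \<Rightarrow> vec" where "ev k = (\<lambda>i. if i = k then 1 else 0)"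

lemma lattice_coord_int: "x \<in> lattice d \<Longrightarrow> x i \<in> \<int>"
  unfolding lattice_def by auto

lemma lattice_space: "x \<in> lattice d \<Longrightarrow> i \<ge> d \<Longrightarrow> x i = 0"
  unfolding lattice_def space_def by auto

lemma euclid_step:
  assumes "d \<ge> 1"
  shows "\<forall>a. a \<in> lattice d \<longrightarrow> nat \<lfloor>\<Sum>i<d. \<bar>a i\<bar>\<rfloor> = n \<longrightarrow>
     (\<exists>U W g. lat_iso d U W \<and> g \<in> \<int> \<and> U a = smul g (ev (d - 1)))"
proof (induction n rule: less_induct)
  case (less n)
  show ?case
  proof (intro allI impI)
    fix a assume a: "a \<in> lattice d" and na: "nat \<lfloor>\<Sum>i<d. \<bar>a i\<bar>\<rfloor> = n"
    show "\<exists>U W g. lat_iso d U W \<and> g \<in> \<int> \<and> U a = smul g (ev (d - 1))"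
    proof (cases "\<exists>i j. i < d \<and> j < d \<and> i \<noteq> j \<and> a i \<noteq> 0 \<and> a j \<noteq> 0 \<and> \<bar>a j\<bar> \<le> \<bar>a i\<bar>")
      case True
      then obtain i j where ij: "i < d" "j < d" "i \<noteq> j" "a i \<noteq> 0" "a j \<noteq> 0" "\<bar>a j\<bar> \<le> \<bar>a i\<bar>" by blast
      define m :: real where "m = (if a i * a j > 0 then -1 else 1)"
      have mI: "m \<in> \<int>" unfolding m_def by auto
      define U1 where "U1 = (\<lambda>(x::vec) k. if k = i then x i + m * x j else x k)"
      define W1 where "W1 = (\<lambda>(x::vec) k. if k = i then x i - m * x j else x k)"
      have iso1: "lat_iso d U1 W1" unfolding U1_def W1_def by (rule lat_iso_addm[OF ij(1-3) mI])
      let ?b = "U1 a"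
      have bL: "?b \<in> lattice d" using iso1 a unfolding lat_iso_def by blast
      have bval: "?b i = a i + m * a j" unfolding U1_def by simp
      have bi: "\<bar>?b i\<bar> = \<bar>a i\<bar> - \<bar>a j\<bar>"
      proof (cases "a i > 0")
        case True
        show ?thesis
        proof (cases "a j > 0")
          case True
          then have "m = -1" using \<open>a i > 0\<close> unfolding m_def by simp
          then show ?thesis using bval ij(6) \<open>a i > 0\<close> True by (simp add: abs_if)
        next
          case False
          then have "a j < 0" using ij(5) by simp
          then have "m = 1" using \<open>a i > 0\<close> unfolding m_def by (simp add: mult_pos_neg less_imp_not_less)
          then show ?thesis using bval ij(6) \<open>a i > 0\<close> \<open>a j < 0\<close> by (simp add: abs_if)
        qed
      next
        case False
        then have ai: "a i < 0" using ij(4) by simp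
        show ?thesis
        proof (cases "a j > 0")
          case True
          then have "m = 1" using ai unfolding m_def by (simp add: mult_neg_pos less_imp_not_less)
          then show ?thesis using bval ij(6) ai True by (simp add: abs_if)
        next
          case False
          then have "a j < 0" using ij(5) by simp
          then have "m = -1" using ai unfolding m_def by (simp add: mult_neg_neg)
          then show ?thesis using bval ij(6) ai \<open>a j < 0\<close> by (simp add: abs_if)
        qed
      qed
      have bk: "k \<noteq> i \<Longrightarrow> ?b k = a k" for k unfolding U1_def by simp
      have "(\<Sum>k<d. \<bar>?b k\<bar>) = (\<Sum>k<d. \<bar>a k\<bar>) - \<bar>a j\<bar>"
      proof -
        have "(\<Sum>k<d. \<bar>?b k\<bar>) = \<bar>?b i\<bar> + (\<Sum>k\<in>{..<d}-{i}. \<bar>?b k\<bar>)"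
          using ij(1) by (intro sum.remove) auto
        moreover have "(\<Sum>k\<in>{..<d}-{i}. \<bar>?b k\<bar>) = (\<Sum>k\<in>{..<d}-{i}. \<bar>a k\<bar>)" using bk by (intro sum.cong) auto
        moreover have "(\<Sum>k<d. \<bar>a k\<bar>) = \<bar>a i\<bar> + (\<Sum>k\<in>{..<d}-{i}. \<bar>a k\<bar>)"
          using ij(1) by (intro sum.remove) auto
        ultimately show ?thesis using bi by simp
      qed
      moreover have "\<bar>a j\<bar> \<ge> 1"
      proof -
        have "a j \<in> \<int>" using a lattice_coord_int by blast
        then obtain z where "a j = of_int z" by (auto elim: Ints_cases)
        then show ?thesis using ij(5) by simp
      qed
      moreover have intS: "(\<Sum>k<d. \<bar>a k\<bar>) \<in> \<int>"
        using a lattice_coord_int by (intro Ints_sum) (simp add: Ints_abs)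
      moreover have intS2: "(\<Sum>k<d. \<bar>?b k\<bar>) \<in> \<int>"
        using bL lattice_coord_int by (intro Ints_sum) (simp add: Ints_abs)
      ultimately have lt: "nat \<lfloor>\<Sum>k<d. \<bar>?b k\<bar>\<rfloor> < n"
      proof -
        assume e: "(\<Sum>k<d. \<bar>?b k\<bar>) = (\<Sum>k<d. \<bar>a k\<bar>) - \<bar>a j\<bar>" and aj: "\<bar>a j\<bar> \<ge> 1"
        obtain A where A: "(\<Sum>k<d. \<bar>a k\<bar>) = of_int A" using intS by (auto elim: Ints_cases)
        obtain B where B: "(\<Sum>k<d. \<bar>?b k\<bar>) = of_int B" using intS2 by (auto elim: Ints_cases)
        have "(0::real) \<le> (\<Sum>k<d. \<bar>?b k\<bar>)" by (rule sum_nonneg) simp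
        then have "B \<ge> 0" using B by simp
        moreover have "B < A" using A B e aj by linarith
        ultimately show ?thesis using na A B by simp
      qed
      obtain U W g where UW: "lat_iso d U W" "g \<in> \<int>" "U ?b = smul g (ev (d - 1))"
        using less.IH[OF lt, rule_format, OF bL refl] by blast
      have "lat_iso d (\<lambda>x. U (U1 x)) (\<lambda>x. W1 (W x))" by (rule lat_iso_comp[OF iso1 UW(1)])
      then show ?thesis using UW by (intro exI[of _ "\<lambda>x. U (U1 x)"] exI[of _ "\<lambda>x. W1 (W x)"] exI[of _ g]) simp
    next
      case False
      have single: "a i = 0 \<or> a j = 0" if "i < d" "j < d" "i \<noteq> j" for i j
      proof (rule ccontr)
        assume "\<not> (a i = 0 \<or> a j = 0)"
        then have nz: "a i \<noteq> 0" "a j \<noteq> 0" by auto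
        show False
        proof (cases "\<bar>a j\<bar> \<le> \<bar>a i\<bar>")
          case True then show False using False that nz by blast
        next
          case F2: False
          then have "\<bar>a i\<bar> \<le> \<bar>a j\<bar>" by simp
          then show False using False that nz by blast
        qed
      qed
      show ?thesis
      proof (cases "\<exists>i<d. a i \<noteq> 0")
        case True
        then obtain i where i: "i < d" "a i \<noteq> 0" by blast
        have d1: "d - 1 < d" using assms by simp
        let ?U = "\<lambda>(x::vec) k. x (sw i (d - 1) k)"
        have iso: "lat_iso d ?U ?U" by (rule lat_iso_swap[OF i(1) d1])
        have "?U a = smul (a i) (ev (d - 1))"
        proof
          fix k
          show "?U a k = smul (a i) (ev (d - 1)) k"
          proof (cases "k = d - 1")
            case True then show ?thesis by (simp add: sw_def smul_def ev_def)
          next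
            case False
            have "sw i (d - 1) k \<noteq> i" using False unfolding sw_def by auto
            then have "a (sw i (d - 1) k) = 0"
              using single[OF _ i(1), of "sw i (d - 1) k"] i lattice_space[OF a, of "sw i (d - 1) k"]
              by (cases "sw i (d - 1) k < d") auto
            then show ?thesis using False by (simp add: smul_def ev_def)
          qed
        qed
        moreover have "a i \<in> \<int>" using a lattice_coord_int by blast
        ultimately show ?thesis using iso by (intro exI[of _ ?U] exI[of _ "a i"]) simp
      next
        case False
        have "a k = 0" for k using False lattice_space[OF a, of k] by (cases "k < d") auto
        then have "a = vzero" by auto
        then have "(\<lambda>x. x) a = smul 0 (ev (d - 1))" by simp
        then show ?thesis using lat_iso_id by (intro exI[of _ "\<lambda>x. x"] exI[of _ "0"]) simp
      qed
    qed
  qed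
qed

lemma unimod_completion:
  assumes d: "d \<ge> 1" and v: "v \<in> lattice d" "prim d v" "v \<noteq> vzero"
  shows "\<exists>U W. lat_iso d U W \<and> U v = ev (d - 1)"
proof -
  obtain U W g where UW: "lat_iso d U W" "g \<in> \<int>" "U v = smul g (ev (d - 1))"
    using euclid_step[OF d] v by blast
  have lin: "vlin U" "vlin W" using UW unfolding lat_iso_def by auto
  have vs: "v \<in> space d" using v unfolding lattice_def by auto
  have eL: "ev (d - 1) \<in> lattice d" using d unfolding lattice_def space_def ev_def by auto
  have weL: "W (ev (d - 1)) \<in> lattice d" using UW eL unfolding lat_iso_def by blast
  have vW: "v = smul g (W (ev (d - 1)))"
  proof -
    have wuv: "W (U v) = v" using UW(1) vs unfolding lat_iso_def by blast
    have "W (U v) = smul g (W (ev (d - 1)))" using UW(3) lin(2) unfolding vlin_def by simp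
    then show ?thesis using wuv by simp
  qed
  have g0: "g \<noteq> 0" using vW v(3) by auto
  have absg: "\<bar>g\<bar> = 1"
  proof (rule ccontr)
    assume ng: "\<bar>g\<bar> \<noteq> 1"
    obtain z where z: "g = of_int z" using UW(2) by (auto elim: Ints_cases)
    have zz: "z \<noteq> 0" "\<bar>z\<bar> \<noteq> 1" using g0 ng z by auto
    have "\<bar>z\<bar> > 1" using zz by (cases "z > 0") auto
    then have "\<bar>g\<bar> > 1" using z by simp
    moreover have "smul (1 / \<bar>g\<bar>) v \<in> lattice d"
    proof -
      have "smul (1 / \<bar>g\<bar>) v = smul (sgn g) (W (ev (d - 1)))"
        using vW g0 by (auto simp: sgn_if abs_if)
      moreover have "sgn g \<in> \<int>" by (simp add: sgn_if)
      ultimately show ?thesis using lattice_smul_int[OF weL] by simp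
    qed
    ultimately show False using v(2) unfolding prim_def by auto
  qed
  show ?thesis
  proof (cases "g = 1")
    case True then show ?thesis using UW by auto
  next
    case False
    then have gm: "g = -1" using absg by (auto simp: abs_if split: if_splits)
    have d1: "d - 1 < d" using d by simp
    let ?N = "\<lambda>(x::vec) k. if k = d - 1 then - x k else x k"
    have "lat_iso d (\<lambda>x. ?N (U x)) (\<lambda>x. W (?N x))" by (rule lat_iso_comp[OF UW(1) lat_iso_neg[OF d1]])
    moreover have "?N (U v) = ev (d - 1)" using UW(3) gm by (auto simp: smul_def ev_def)
    ultimately show ?thesis by blast
  qed
qed



lemma space_closed_isum: "finite I \<Longrightarrow> (\<And>j. j \<in> I \<Longrightarrow> w j \<in> space d) \<Longrightarrow> isum I a w \<in> space d"
  by (rule isum_closed[where P="\<lambda>_. True"]) (auto simp: space_def smul_def)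

lemma lattice_closed_isum: "finite I \<Longrightarrow> (\<And>j. j \<in> I \<Longrightarrow> a j \<in> \<int>) \<Longrightarrow> (\<And>j. j \<in> I \<Longrightarrow> w j \<in> lattice d) \<Longrightarrow> isum I a w \<in> lattice d"
  by (rule isum_closed[where P="\<lambda>t. t \<in> \<int>"]) (auto intro: lattice_zero lattice_add lattice_smul_int)

lemma pos_hull_space: "S \<subseteq> space d \<Longrightarrow> pos_hull S \<subseteq> space d"
  unfolding pos_hull_isum_def by (auto intro!: space_closed_isum)

lemma lattice_sub_space: "lattice d \<subseteq> space d"
  unfolding lattice_def by auto

lemma space_expand: "y \<in> space d \<Longrightarrow> y = isum {..<d} (\<lambda>i. y i) ev"
proof
  fix k assume y: "y \<in> space d"
  have "isum {..<d} (\<lambda>i. y i) ev k = (\<Sum>i<d. if i = k then y i else 0)"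
    by (simp add: isum_apply ev_def if_distrib cong: if_cong)
  also have "\<dots> = (if k < d then y k else 0)" by (simp add: sum.delta)
  also have "\<dots> = y k" using y unfolding space_def by auto
  finally show "y k = isum {..<d} (\<lambda>i. y i) ev k" by simp
qed

lemma isum_swap: "finite T \<Longrightarrow> finite I \<Longrightarrow>
  isum T lam (\<lambda>t. isum I (mu t) w) = isum I (\<lambda>j. \<Sum>t\<in>T. lam t * mu t j) w"
  unfolding isum_def by (rule ext) (simp add: sum_distrib_left sum_distrib_right mult.assoc sum.swap[of _ T I])

lemma lin_indep_fin: assumes "finite G" "\<And>c. isum G c (\<lambda>v. v) = vzero \<Longrightarrow> \<forall>g\<in>G. c g = 0"
  shows "lin_indep G"
  unfolding lin_indep_isum_def
proof (intro allI impI ballI)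
  fix T c v assume T: "finite T \<and> T \<subseteq> G \<and> isum T c (\<lambda>v. v) = vzero" and v: "v \<in> T"
  have "isum G (\<lambda>j. if j \<in> T then c j else 0) (\<lambda>v. v) = vzero"
    using isum_extend[OF assms(1), of T c "\<lambda>v. v"] T by simp
  then have "\<forall>g\<in>G. (if g \<in> T then c g else 0) = 0" by (rule assms(2))
  moreover have "v \<in> G" using v T by blast
  ultimately have "(if v \<in> T then c v else 0) = 0" by blast
  then show "c v = 0" using v by presburger
qed



locale mainctx =
  fixes d :: nat and C :: "vec set" and v :: "nat \<Rightarrow> vec" and U W :: "vec \<Rightarrow> vec"
  assumes d1: "d \<ge> 1" and rat: "rational_cone d C" and fd: "full_dim d C" and simp: "simplicial d C"
    and inj: "inj_on v {..<d}" and gens: "v ` {..<d} = ext_gens d C"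
    and iso: "lat_iso d U W" and Uv: "U (v 0) = ev (d - 1)"
begin

definition pr :: "vec \<Rightarrow> vec" where "pr x = (\<lambda>i. if i < d - 1 then U x i else 0)"
definition ta :: "vec \<Rightarrow> real" where "ta x = U x (d - 1)"

lemma linU: "vlin U" and linW: "vlin W" using iso unfolding lat_iso_def by auto

lemma U_space: "x \<in> space d \<Longrightarrow> U x \<in> space d" using iso unfolding lat_iso_def by blast
lemma W_space: "x \<in> space d \<Longrightarrow> W x \<in> space d" using iso unfolding lat_iso_def by blast
lemma U_lat: "x \<in> lattice d \<Longrightarrow> U x \<in> lattice d" using iso unfolding lat_iso_def by blast
lemma W_lat: "x \<in> lattice d \<Longrightarrow> W x \<in> lattice d" using iso unfolding lat_iso_def by blast
lemma WU: "x \<in> space d \<Longrightarrow> W (U x) = x" using iso unfolding lat_iso_def by blast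
lemma UW: "x \<in> space d \<Longrightarrow> U (W x) = x" using iso unfolding lat_iso_def by blast

lemma ext_v: "j < d \<Longrightarrow> v j \<in> ext_gens d C" using gens by blast
lemma v_lat: "j < d \<Longrightarrow> v j \<in> lattice d" using ext_v unfolding ext_gens_def by blast
lemma v_prim: "j < d \<Longrightarrow> prim d (v j)" using ext_v unfolding ext_gens_prim by blast
lemma v_ext: "j < d \<Longrightarrow> extreme_ray C (v j)" using ext_v unfolding ext_gens_def by blast
lemma v_nz: "j < d \<Longrightarrow> v j \<noteq> vzero" using v_ext unfolding extreme_ray_def by blast
lemma v_space: "j < d \<Longrightarrow> v j \<in> space d" using v_lat lattice_sub_space by blast
lemma d0: "0 < d" using d1 by simp

lemma C_eq: "C = pos_hull (v ` {..<d})"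
  using cone_ext_gen[OF rat] gens by simp

lemma C_space: "C \<subseteq> space d"
  unfolding C_eq by (rule pos_hull_space) (use v_space in auto)

lemma C_coords: "x \<in> C \<Longrightarrow> \<exists>a. (\<forall>j. a j \<ge> 0) \<and> x = isum {..<d} a v"
proof -
  assume "x \<in> C"
  then obtain c where c: "\<forall>u\<in>v ` {..<d}. c u \<ge> 0" "x = isum (v ` {..<d}) c (\<lambda>u. u)"
    using pos_hull_fin[of "v ` {..<d}" x] C_eq by auto
  have "x = isum {..<d} (c \<circ> v) v" using c(2) isum_reindex[OF inj, of c "\<lambda>u. u"] by (simp add: comp_def)
  also have "\<dots> = isum {..<d} (\<lambda>j. if j < d then c (v j) else 0) v" by (rule isum_cong) auto
  finally show ?thesis using c(1) by (intro exI[of _ "\<lambda>j. if j < d then c (v j) else 0"]) auto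
qed

lemma C_mem: "(\<And>j. j < d \<Longrightarrow> a j \<ge> 0) \<Longrightarrow> isum {..<d} a v \<in> C"
  unfolding C_eq by (rule pos_hull_isum) (auto intro: pos_hull_base)

lemma v_unique: assumes "isum {..<d} a v = isum {..<d} b v" "j < d" shows "a j = b j"
proof -
  have li: "lin_indep (v ` {..<d})" using simp gens unfolding simplicial_def by simp
  show ?thesis by (rule lin_indep_idx[OF li inj _ assms(1)]) (use assms in auto)
qed

lemma v0_C: "v 0 \<in> C" using v_ext[OF d0] unfolding extreme_ray_def by blast

lemma We: "W (ev (d - 1)) = v 0" using WU[OF v_space[OF d0]] Uv by simp

lemma pr_lin: "vlin pr"
  using linU unfolding vlin_def pr_def by (auto simp: smul_def fun_eq_iff)

lemma ta_add: "ta (\<lambda>i. x i + y i) = ta x + ta y"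
  using linU unfolding vlin_def ta_def by simp

lemma ta_smul: "ta (smul t x) = t * ta x"
  using linU unfolding vlin_def ta_def by (simp add: smul_def)

lemma ta_isum: assumes "finite I" shows "ta (isum I a w) = (\<Sum>j\<in>I. a j * ta (w j))"
  unfolding ta_def vlin_isum[OF linU assms] by (simp add: isum_apply)

lemma pr_isum: "finite I \<Longrightarrow> pr (isum I a w) = isum I a (\<lambda>j. pr (w j))"
  by (erule vlin_isum[OF pr_lin])

lemma decomp: assumes "x \<in> space d" shows "x = (\<lambda>i. W (pr x) i + ta x * v 0 i)"
proof -
  have Ux: "U x = (\<lambda>i. pr x i + smul (ta x) (ev (d - 1)) i)"
  proof
    fix i
    show "U x i = pr x i + smul (ta x) (ev (d - 1)) i"
    proof (cases "i < d - 1")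
      case True then show ?thesis by (simp add: pr_def smul_def ev_def)
    next
      case False
      show ?thesis
      proof (cases "i = d - 1")
        case True then show ?thesis using False by (simp add: pr_def smul_def ev_def ta_def)
      next
        case F2: False
        then have "i \<ge> d" using False by simp
        then have "U x i = 0" using U_space[OF assms] unfolding space_def by blast
        then show ?thesis using False F2 by (simp add: pr_def smul_def ev_def)
      qed
    qed
  qed
  have "x = W (U x)" using WU[OF assms] by simp
  also have "\<dots> = (\<lambda>i. W (pr x) i + W (smul (ta x) (ev (d - 1))) i)" using Ux linW unfolding vlin_def by metis
  also have "\<dots> = (\<lambda>i. W (pr x) i + ta x * v 0 i)" using linW We unfolding vlin_def by (simp add: smul_def)
  finally show ?thesis .
qed

lemma pr_lattice: "x \<in> lattice d \<Longrightarrow> pr x \<in> lattice (d - 1)"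
  using U_lat[of x] unfolding lattice_def space_def pr_def by auto

lemma pr_space: "pr x \<in> space (d - 1)"
  unfolding space_def pr_def by auto

lemma ta_int: "x \<in> lattice d \<Longrightarrow> ta x \<in> \<int>"
  using U_lat[of x] unfolding lattice_def ta_def by auto

lemma space_mono: "space (d - 1) \<subseteq> space d"
  unfolding space_def by auto

lemma lattice_mono: "lattice (d - 1) \<subseteq> lattice d"
  unfolding lattice_def space_def by auto

lemma prW: assumes "y \<in> space (d - 1)" shows "pr (W y) = y" and "ta (W y) = 0"
proof -
  have "U (W y) = y" using UW space_mono assms by blast
  then show "pr (W y) = y" "ta (W y) = 0" using assms unfolding pr_def ta_def space_def
    by (auto simp: fun_eq_iff)
qed

lemma pr_v0: "pr (v 0) = vzero" and ta_v0: "ta (v 0) = 1"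
  using Uv d1 unfolding pr_def ta_def ev_def by (auto simp: fun_eq_iff)

lemma W_zero: "W vzero = vzero" by (rule vlin_zero[OF linW])

lemma ker: assumes "x \<in> space d" "pr x = vzero" shows "x = smul (ta x) (v 0)"
  using decomp[OF assms(1)] assms(2) W_zero by (simp add: smul_def)

end


lemma ext_sub_hilb: "ext_gens e D \<subseteq> hilb e D"
proof
  fix u assume u: "u \<in> ext_gens e D"
  then have uL: "u \<in> lattice e" and ex: "extreme_ray D u" and pu: "prim e u" unfolding ext_gens_prim by auto
  have uD: "u \<in> D" and u0: "u \<noteq> vzero" using ex unfolding extreme_ray_def by auto
  have "\<not> (\<exists>y\<in>D \<inter> lattice e. \<exists>z\<in>D \<inter> lattice e. y \<noteq> vzero \<and> z \<noteq> vzero \<and> u = (\<lambda>i. y i + z i))"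
  proof
    assume "\<exists>y\<in>D \<inter> lattice e. \<exists>z\<in>D \<inter> lattice e. y \<noteq> vzero \<and> z \<noteq> vzero \<and> u = (\<lambda>i. y i + z i)"
    then obtain y z where yz: "y \<in> D" "y \<in> lattice e" "z \<in> D" "y \<noteq> vzero" "z \<noteq> vzero" "u = (\<lambda>i. y i + z i)"
      by blast
    have H: "\<And>x y. x \<in> D \<Longrightarrow> y \<in> D \<Longrightarrow> (\<exists>t\<ge>0. (\<lambda>i. x i + y i) = smul t u) \<Longrightarrow>
         (\<exists>s\<ge>0. x = smul s u) \<and> (\<exists>s\<ge>0. y = smul s u)" using ex unfolding extreme_ray_def by blast
    have "\<exists>t\<ge>0. (\<lambda>i. y i + z i) = smul t u" using yz(6) by (intro exI[of _ 1]) simp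
    then have "(\<exists>s\<ge>0. y = smul s u) \<and> (\<exists>s\<ge>0. z = smul s u)" using H[OF yz(1) yz(3)] by blast
    then obtain s r where sr: "s \<ge> 0" "y = smul s u" "r \<ge> 0" "z = smul r u" by blast
    have "smul 1 u = smul (s + r) u" using yz(6) sr by (auto simp: smul_def fun_eq_iff algebra_simps)
    then have "1 = s + r" by (rule smul_eq_nonzero[OF _ u0])
    then have "s + r = 1" by simp
    moreover have "s \<noteq> 0" using sr yz(4) by auto
    moreover have "r \<noteq> 0" using sr yz(5) by auto
    ultimately have "0 < s" "s < 1" using sr by auto
    then show False using pu yz(2) sr(2) unfolding prim_def by blast
  qed
  then show "u \<in> hilb e D" unfolding hilb_def using uD uL u0 by blast
qed

context mainctx
begin

definition Cp :: "vec set" where "Cp = pr ` C"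

lemma pr_add: "pr (\<lambda>i. x i + y i) = (\<lambda>i. pr x i + pr y i)" using pr_lin unfolding vlin_def by blast
lemma pr_smul: "pr (smul t x) = smul t (pr x)" using pr_lin unfolding vlin_def by blast

lemma Cp_add: assumes "x \<in> Cp" "y \<in> Cp" shows "(\<lambda>i. x i + y i) \<in> Cp"
proof -
  obtain a b where ab: "a \<in> C" "x = pr a" "b \<in> C" "y = pr b" using assms unfolding Cp_def by blast
  have "(\<lambda>i. x i + y i) = pr (\<lambda>i. a i + b i)" using pr_add ab by simp
  then show ?thesis unfolding Cp_def using rc_add[OF rat ab(1) ab(3)] by (rule image_eqI)
qed

lemma Cp_smul: assumes "x \<in> Cp" "t \<ge> 0" shows "smul t x \<in> Cp"
proof -
  obtain a where ab: "a \<in> C" "x = pr a" using assms unfolding Cp_def by blast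
  have "smul t x = pr (smul t a)" using pr_smul ab by simp
  then show ?thesis unfolding Cp_def using rc_smul[OF rat ab(1) assms(2)] by (rule image_eqI)
qed

lemma Cp_zero: "vzero \<in> Cp"
proof -
  have "vzero = pr vzero" using vlin_zero[OF pr_lin] by simp
  then show ?thesis unfolding Cp_def using rc_zero[OF rat] by (rule image_eqI)
qed

lemma Cp_coords: assumes "y \<in> Cp" shows "\<exists>a. (\<forall>j. a j \<ge> 0) \<and> y = isum {..<d} a (\<lambda>j. pr (v j))"
proof -
  obtain x where x: "x \<in> C" "y = pr x" using assms unfolding Cp_def by blast
  obtain a where a: "\<forall>j. a j \<ge> 0" "x = isum {..<d} a v" using C_coords[OF x(1)] by blast
  show ?thesis using a x pr_isum[of "{..<d}" a v] by auto
qed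

lemma v_C: "j < d \<Longrightarrow> v j \<in> C"
  using C_eq pos_hull_base[of "v j" "v ` {..<d}"] by simp

lemma prv_Cp: "j < d \<Longrightarrow> pr (v j) \<in> Cp"
  unfolding Cp_def by (rule imageI, rule v_C)

lemma Cp_eq: "Cp = pos_hull (pr ` v ` {..<d})"
proof
  show "Cp \<subseteq> pos_hull (pr ` v ` {..<d})"
  proof
    fix y assume "y \<in> Cp"
    then obtain a where a: "\<forall>j. a j \<ge> 0" "y = isum {..<d} a (\<lambda>j. pr (v j))" using Cp_coords by blast
    show "y \<in> pos_hull (pr ` v ` {..<d})" unfolding a(2)
      by (rule pos_hull_isum) (use a in \<open>auto intro: pos_hull_base\<close>)
  qed
next
  show "pos_hull (pr ` v ` {..<d}) \<subseteq> Cp"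
  proof
    fix y assume "y \<in> pos_hull (pr ` v ` {..<d})"
    then obtain T c where T: "finite T" "T \<subseteq> pr ` v ` {..<d}" "\<forall>u\<in>T. 0 \<le> c u" "y = isum T c (\<lambda>u. u)"
      unfolding pos_hull_isum_def by blast
    have sub: "\<And>u. u \<in> T \<Longrightarrow> u \<in> Cp" using T(2) prv_Cp by blast
    show "y \<in> Cp" unfolding T(4)
      by (rule isum_closed[where P="\<lambda>t. t \<ge> 0", OF T(1)]) (simp_all add: T(3) sub Cp_zero Cp_add Cp_smul)
  qed
qed

lemma Cp_rc: "rational_cone (d - 1) Cp"
  unfolding rational_cone_def
proof (intro conjI allI impI)
  show "\<exists>S. finite S \<and> S \<subseteq> lattice (d - 1) \<and> Cp = pos_hull S"
    using Cp_eq pr_lattice v_lat by (intro exI[of _ "pr ` v ` {..<d}"]) auto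
next
  fix y assume y: "y \<in> Cp \<and> smul (-1) y \<in> Cp"
  obtain x1 where x1: "x1 \<in> C" "y = pr x1" using y unfolding Cp_def by blast
  obtain x2 where x2: "x2 \<in> C" "smul (-1) y = pr x2" using y unfolding Cp_def by blast
  let ?z = "\<lambda>i. x1 i + x2 i"
  have zC: "?z \<in> C" using rc_add[OF rat x1(1) x2(1)] .
  have zs: "?z \<in> space d" using zC C_space by blast
  have "pr ?z = vzero"
  proof
    fix i
    have "pr x2 i = - y i" using fun_cong[OF x2(2), of i] by (simp add: smul_def)
    then show "pr ?z i = 0" using pr_add[of x1 x2] x1(2) by simp
  qed
  then have zeq: "?z = smul (ta ?z) (v 0)" using ker[OF zs] by blast
  show "y = vzero"
  proof (cases "ta ?z \<ge> 0")
    case True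
    have H: "\<And>x y. x \<in> C \<Longrightarrow> y \<in> C \<Longrightarrow> (\<exists>t\<ge>0. (\<lambda>i. x i + y i) = smul t (v 0)) \<Longrightarrow>
         (\<exists>s\<ge>0. x = smul s (v 0)) \<and> (\<exists>s\<ge>0. y = smul s (v 0))"
      using v_ext[OF d0] unfolding extreme_ray_def by blast
    have "\<exists>t\<ge>0. ?z = smul t (v 0)" using True zeq by blast
    then obtain s where "x1 = smul s (v 0)" using H[OF x1(1) x2(1)] by blast
    then show ?thesis using x1(2) pr_smul pr_v0 by simp
  next
    case False
    define t where "t = ta ?z"
    have t: "t < 0" using False unfolding t_def by simp
    have "smul (- 1 / t) ?z \<in> C" using t zC rc_smul[OF rat] by simp
    moreover have "smul (- 1 / t) ?z = smul (- 1 / t) (smul t (v 0))" using zeq unfolding t_def by simp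
    moreover have "smul (- 1 / t) (smul t (v 0)) = smul (-1) (v 0)" using t by simp
    ultimately have "smul (-1) (v 0) \<in> C" by simp
    then have "v 0 = vzero" using v0_C rat unfolding rational_cone_def by blast
    then show ?thesis using v_nz[OF d0] by simp
  qed
qed

lemma Cp_fd: "full_dim (d - 1) Cp"
  unfolding full_dim_def
proof
  fix y assume y: "y \<in> space (d - 1)"
  have "W y \<in> space d" using W_space space_mono y by blast
  then have "W y \<in> lin_span C" using fd unfolding full_dim_def by blast
  then obtain T c where T: "finite T" "T \<subseteq> C" "W y = isum T c (\<lambda>v. v)"
    unfolding lin_span_isum_def by blast
  have "y = pr (W y)" using prW(1)[OF y] by simp
  also have "\<dots> = isum T c (\<lambda>t. pr t)" using T pr_isum by simp
  also have "\<dots> \<in> lin_span Cp"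
    by (rule lin_span_isum[OF T(1)]) (use T in \<open>auto simp: Cp_def intro!: lin_span_base\<close>)
  finally show "y \<in> lin_span Cp" .
qed

definition K :: "real \<Rightarrow> vec set" where
  "K r = {isum {..<d} mu (\<lambda>j. pr (v j)) | mu. (\<forall>j. mu j \<ge> 0) \<and> (\<Sum>j<d. mu j) \<le> r}"

lemma ext_Cp_K: "ext_gens (d - 1) Cp \<subseteq> K 1"
proof
  fix u assume u: "u \<in> ext_gens (d - 1) Cp"
  then have ex: "extreme_ray Cp u" and uL: "u \<in> lattice (d - 1)" and pu: "prim (d - 1) u"
    unfolding ext_gens_prim by auto
  have "u \<in> Cp" using ex unfolding extreme_ray_def by blast
  then obtain a where a: "\<forall>j. a j \<ge> 0" "u = isum {..<d} a (\<lambda>j. pr (v j))" using Cp_coords by blast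
  have "\<exists>j\<in>{..<d}. \<exists>r>0. u = smul r (pr (v j))"
    by (rule ext_single[OF ex Cp_rc]) (use a prv_Cp in auto)
  then obtain j r where jr: "j < d" "r > 0" "u = smul r (pr (v j))" by blast
  have r1: "r \<le> 1"
  proof (rule ccontr)
    assume "\<not> r \<le> 1"
    then have "0 < 1 / r" "1 / r < 1" by auto
    then have "smul (1 / r) u \<notin> lattice (d - 1)" using pu unfolding prim_def by blast
    moreover have "smul (1 / r) u = pr (v j)" using jr by simp
    moreover have "pr (v j) \<in> lattice (d - 1)" using pr_lattice v_lat jr by blast
    ultimately show False by simp
  qed
  have "u = isum {..<d} (\<lambda>k. if k = j then r else 0) (\<lambda>j. pr (v j))"
    using isum_single[of "{..<d}" j "\<lambda>k. if k = j then r else 0" "\<lambda>j. pr (v j)"] jr by simp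
  moreover have "(\<Sum>k<d. (if k = j then r else 0)) \<le> 1" using jr r1 by simp
  ultimately show "u \<in> K 1" unfolding K_def using jr by (auto intro!: exI[of _ "\<lambda>k. if k = j then r else 0"])
qed

lemma Delta_Cp_K: "Delta (d - 1) Cp \<subseteq> K 1"
proof
  fix y assume "y \<in> Delta (d - 1) Cp"
  then obtain T lam where T: "finite T" "T \<subseteq> insert vzero (ext_gens (d - 1) Cp)" "\<forall>t\<in>T. lam t \<ge> 0"
    "(\<Sum>t\<in>T. lam t) = 1" "y = isum T lam (\<lambda>v. v)"
    unfolding Delta_def convex_hull_v_def isum_def by blast
  have "\<forall>t\<in>T. \<exists>mu. (\<forall>j. mu j \<ge> 0) \<and> (\<Sum>j<d. mu j) \<le> 1 \<and> t = isum {..<d} mu (\<lambda>j. pr (v j))"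
  proof
    fix t assume t: "t \<in> T"
    show "\<exists>mu. (\<forall>j. mu j \<ge> 0) \<and> (\<Sum>j<d. mu j) \<le> 1 \<and> t = isum {..<d} mu (\<lambda>j. pr (v j))"
    proof (cases "t = vzero")
      case True then show ?thesis by (intro exI[of _ "\<lambda>_. 0"]) (simp add: isum_def)
    next
      case False
      then have "t \<in> K 1" using t T(2) ext_Cp_K by blast
      then show ?thesis unfolding K_def by blast
    qed
  qed
  then obtain mu where mu0: "\<forall>t\<in>T. (\<forall>j. mu t j \<ge> 0) \<and> (\<Sum>j<d. mu t j) \<le> 1 \<and> t = isum {..<d} (mu t) (\<lambda>j. pr (v j))"
    by (rule bchoice[elim_format]) blast
  then have mu: "\<And>t. t \<in> T \<Longrightarrow> (\<forall>j. mu t j \<ge> 0) \<and> (\<Sum>j<d. mu t j) \<le> 1 \<and> t = isum {..<d} (mu t) (\<lambda>j. pr (v j))"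
    by blast
  have "y = isum T lam (\<lambda>t. isum {..<d} (mu t) (\<lambda>j. pr (v j)))"
    unfolding T(5) by (rule isum_cong) (use mu in auto)
  also have "\<dots> = isum {..<d} (\<lambda>j. \<Sum>t\<in>T. lam t * mu t j) (\<lambda>j. pr (v j))"
    by (rule isum_swap[OF T(1)]) simp
  finally have yeq: "y = isum {..<d} (\<lambda>j. \<Sum>t\<in>T. lam t * mu t j) (\<lambda>j. pr (v j))" .
  have "(\<Sum>j<d. \<Sum>t\<in>T. lam t * mu t j) = (\<Sum>t\<in>T. lam t * (\<Sum>j<d. mu t j))"
    by (simp add: sum.swap[of _ "{..<d}" T] sum_distrib_left)
  also have "\<dots> \<le> (\<Sum>t\<in>T. lam t * 1)"
  proof (rule sum_mono)
    fix t assume t: "t \<in> T"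
    have "(\<Sum>j<d. mu t j) \<le> 1" using mu[OF t] by blast
    moreover have "lam t \<ge> 0" using T(3) t by blast
    ultimately show "lam t * (\<Sum>j<d. mu t j) \<le> lam t * 1" by (rule mult_left_mono)
  qed
  also have "\<dots> = 1" using T(4) by simp
  finally have "(\<Sum>j<d. \<Sum>t\<in>T. lam t * mu t j) \<le> 1" .
  moreover have "\<forall>j. (\<Sum>t\<in>T. lam t * mu t j) \<ge> 0" using mu T(3) by (auto intro!: sum_nonneg)
  ultimately show "y \<in> K 1" unfolding K_def using yeq by blast
qed

lemma scale_K: assumes "r \<ge> 0" shows "scale_set r (K 1) \<subseteq> K r"
proof
  fix y assume "y \<in> scale_set r (K 1)"
  then obtain mu where mu: "\<forall>j. mu j \<ge> 0" "(\<Sum>j<d. mu j) \<le> 1" "y = smul r (isum {..<d} mu (\<lambda>j. pr (v j)))"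
    unfolding scale_set_def K_def by blast
  have "y = isum {..<d} (\<lambda>j. r * mu j) (\<lambda>j. pr (v j))" using mu(3) isum_smul by simp
  moreover have "(\<Sum>j<d. r * mu j) \<le> r" using mu(2) assms by (simp add: sum_distrib_left[symmetric] mult_left_le)
  moreover have "\<forall>j. r * mu j \<ge> 0" using mu(1) assms by simp
  ultimately show "y \<in> K r" unfolding K_def by blast
qed

definition lift_ok :: "real \<Rightarrow> vec \<Rightarrow> vec \<Rightarrow> bool" where
  "lift_ok r e w \<longleftrightarrow> w \<in> lattice d \<and> pr w = e \<and>
     (\<exists>xi. w = isum {..<d} xi v \<and> (\<forall>j. xi j \<ge> 0) \<and> xi 0 < 1 \<and> (\<Sum>j<d. xi j) \<le> r + 1)"

lemma lift_exists: assumes "e \<in> K r" "e \<in> lattice (d - 1)" shows "\<exists>w. lift_ok r e w"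
proof -
  obtain mu where mu: "\<forall>j. mu j \<ge> 0" "(\<Sum>j<d. mu j) \<le> r" "e = isum {..<d} mu (\<lambda>j. pr (v j))"
    using assms(1) unfolding K_def by blast
  define mu' where "mu' j = (if j = 0 then 0 else mu j)" for j
  define z where "z = isum {..<d} mu' v"
  have "pr z = isum {..<d} mu' (\<lambda>j. pr (v j))" unfolding z_def by (simp add: pr_isum)
  also have "\<dots> = e" unfolding mu(3) by (rule isum_cong) (auto simp: mu'_def pr_v0)
  finally have prz: "pr z = e" .
  have zs: "z \<in> space d" unfolding z_def by (rule space_closed_isum) (auto intro: v_space)
  define f where "f = of_int \<lceil>ta z\<rceil> - ta z"
  have f: "0 \<le> f" "f < 1" unfolding f_def by linarith+
  define w where "w = (\<lambda>i. z i + f * v 0 i)"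
  have weq: "w = (\<lambda>i. W e i + of_int \<lceil>ta z\<rceil> * v 0 i)"
    using decomp[OF zs] prz unfolding w_def f_def by (auto simp: fun_eq_iff algebra_simps)
  have "W e \<in> lattice d" using W_lat lattice_mono assms(2) by blast
  moreover have "smul (of_int \<lceil>ta z\<rceil>) (v 0) \<in> lattice d" using lattice_smul_int v_lat[OF d0] by simp
  ultimately have wL: "w \<in> lattice d" unfolding weq using lattice_add[of "W e" d] by (simp add: smul_def)
  have "pr w = (\<lambda>i. pr z i + pr (smul f (v 0)) i)" unfolding w_def using pr_add[of z "smul f (v 0)"] by (simp add: smul_def)
  then have prw: "pr w = e" using prz pr_smul pr_v0 by simp
  define xi where "xi j = mu' j + (if j = 0 then f else 0)" for j
  have "w = isum {..<d} xi v"
  proof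
    fix i
    have "isum {..<d} xi v i = isum {..<d} mu' v i + isum {..<d} (\<lambda>j. if j = 0 then f else 0) v i"
      unfolding xi_def isum_apply by (simp add: distrib_right sum.distrib)
    also have "isum {..<d} (\<lambda>j. if j = 0 then f else 0) v = smul f (v 0)"
      using isum_single[of "{..<d}" 0 "\<lambda>j. if j = 0 then f else 0" v] d0 by simp
    finally show "w i = isum {..<d} xi v i" unfolding w_def z_def by (simp add: smul_def)
  qed
  moreover have "\<forall>j. xi j \<ge> 0" using mu(1) f unfolding xi_def mu'_def by auto
  moreover have "xi 0 < 1" using f unfolding xi_def mu'_def by simp
  moreover have "(\<Sum>j<d. xi j) \<le> r + 1"
  proof -
    have "(\<Sum>j<d. xi j) = (\<Sum>j<d. mu' j) + f" unfolding xi_def using d0 by (simp add: sum.distrib)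
    moreover have "(\<Sum>j<d. mu' j) \<le> (\<Sum>j<d. mu j)" unfolding mu'_def by (rule sum_mono) (use mu(1) in auto)
    ultimately show ?thesis using mu(2) f by linarith
  qed
  ultimately show ?thesis unfolding lift_ok_def using wL prw by blast
qed

end


context mainctx
begin
definition lift :: "real \<Rightarrow> vec \<Rightarrow> vec" where "lift r e = (SOME w. lift_ok r e w)"
end

locale piece = mainctx +
  fixes r :: real and Dp :: "vec set"
  assumes uniDp: "unimodular (d - 1) Dp" and hbDp: "hilb (d - 1) Dp \<subseteq> K r"
begin

abbreviation "E \<equiv> ext_gens (d - 1) Dp"
abbreviation "L \<equiv> lift r ` E"
abbreviation "G \<equiv> insert (v 0) L"

lemma Dp_rc: "rational_cone (d - 1) Dp" using uniDp unfolding unimodular_def simplicial_def by blast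
lemma E_fin: "finite E" and Dp_eq: "Dp = pos_hull E" using cone_ext_gen[OF Dp_rc] by auto
lemma E_li: "lin_indep E" using uniDp unfolding unimodular_def simplicial_def by blast
lemma E_uni: "lattice (d - 1) \<inter> lin_span E \<subseteq> int_span E" using uniDp unfolding unimodular_def by blast
lemma E_lat: "e \<in> E \<Longrightarrow> e \<in> lattice (d - 1)" unfolding ext_gens_def by blast
lemma E_prim: "e \<in> E \<Longrightarrow> prim (d - 1) e" unfolding ext_gens_prim by blast
lemma E_nz: "e \<in> E \<Longrightarrow> e \<noteq> vzero" unfolding ext_gens_def extreme_ray_def by blast

lemma lift_ok_E: assumes "e \<in> E" shows "lift_ok r e (lift r e)"
proof -
  have "e \<in> K r" using ext_sub_hilb hbDp assms by blast
  then have "\<exists>w. lift_ok r e w" using lift_exists E_lat[OF assms] by blast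
  then show ?thesis unfolding lift_def by (rule someI_ex)
qed

lemma pr_lift: "e \<in> E \<Longrightarrow> pr (lift r e) = e" using lift_ok_E unfolding lift_ok_def by blast
lemma lift_lat: "e \<in> E \<Longrightarrow> lift r e \<in> lattice d" using lift_ok_E unfolding lift_ok_def by blast
lemma lift_xi: "e \<in> E \<Longrightarrow> \<exists>xi. lift r e = isum {..<d} xi v \<and> (\<forall>j. xi j \<ge> 0) \<and> xi 0 < 1 \<and> (\<Sum>j<d. xi j) \<le> r + 1"
  using lift_ok_E unfolding lift_ok_def by blast

lemma lift_inj: "inj_on (lift r) E"
proof (rule inj_onI)
  fix x y assume "x \<in> E" "y \<in> E" "lift r x = lift r y"
  then have "pr (lift r x) = pr (lift r y)" by simp
  then show "x = y" using pr_lift \<open>x \<in> E\<close> \<open>y \<in> E\<close> by simp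
qed

lemma v0_notin: "v 0 \<notin> L"
proof
  assume "v 0 \<in> L"
  then obtain e where e: "e \<in> E" "v 0 = lift r e" by blast
  then have "pr (v 0) = pr (lift r e)" by simp
  then have "e = vzero" using pr_lift[OF e(1)] pr_v0 by simp
  then show False using E_nz e by blast
qed

lemma G_fin: "finite G" using E_fin by simp

lemma pr_isumG: "pr (isum G c (\<lambda>u. u)) = isum E (\<lambda>e. c (lift r e)) (\<lambda>u. u)"
proof -
  have finL: "finite L" using E_fin by simp
  have "pr (isum G c (\<lambda>u. u)) = isum G c pr" using pr_isum[OF G_fin] by simp
  also have "\<dots> = (\<lambda>i. c (v 0) * pr (v 0) i + isum L c pr i)" using isum_insert[OF finL v0_notin] by simp
  also have "\<dots> = isum L c pr" using pr_v0 by simp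
  also have "\<dots> = isum E (\<lambda>e. c (lift r e)) (\<lambda>e. pr (lift r e))" using isum_reindex[OF lift_inj] by (simp add: comp_def)
  also have "\<dots> = isum E (\<lambda>e. c (lift r e)) (\<lambda>u. u)" by (rule isum_cong) (simp add: pr_lift)
  finally show ?thesis .
qed

lemma isumG_split: "isum G c (\<lambda>u. u) = (\<lambda>i. c (v 0) * v 0 i + isum E (\<lambda>e. c (lift r e)) (lift r) i)"
proof -
  have finL: "finite L" using E_fin by simp
  have "isum G c (\<lambda>u. u) = (\<lambda>i. c (v 0) * v 0 i + isum L c (\<lambda>u. u) i)" using isum_insert[OF finL v0_notin] by simp
  also have "isum L c (\<lambda>u. u) = isum E (\<lambda>e. c (lift r e)) (lift r)" using isum_reindex[OF lift_inj] by (simp add: comp_def)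
  finally show ?thesis .
qed

lemma G_li: "lin_indep G"
proof (rule lin_indep_fin[OF G_fin])
  fix c assume c0: "isum G c (\<lambda>u. u) = vzero"
  have "isum E (\<lambda>e. c (lift r e)) (\<lambda>u. u) = isum E (\<lambda>_. 0) (\<lambda>u. u)"
    using pr_isumG[of c] c0 vlin_zero[OF pr_lin] by (simp add: isum_def)
  then have cl: "\<And>e. e \<in> E \<Longrightarrow> c (lift r e) = 0" using lin_indep_unique[OF E_li E_fin] by blast
  have "isum E (\<lambda>e. c (lift r e)) (lift r) = vzero" using cl by (simp add: isum_def)
  then have "smul (c (v 0)) (v 0) = smul 0 (v 0)" using c0 isumG_split[of c] by (simp add: smul_def)
  then have "c (v 0) = 0" using smul_eq_nonzero v_nz[OF d0] by blast
  then show "\<forall>g\<in>G. c g = 0" using cl by blast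
qed

lemma G_lat: "G \<subseteq> lattice d" using v_lat[OF d0] lift_lat by blast

lemma G_prim: "g \<in> G \<Longrightarrow> prim d g"
proof -
  assume g: "g \<in> G"
  show "prim d g"
  proof (cases "g = v 0")
    case True then show ?thesis using v_prim[OF d0] by simp
  next
    case False
    then obtain e where e: "e \<in> E" "g = lift r e" using g by blast
    show ?thesis unfolding prim_def
    proof (intro allI impI notI)
      fix t assume t: "0 < t \<and> t < 1" "smul t g \<in> lattice d"
      then have "pr (smul t g) \<in> lattice (d - 1)" by (rule_tac pr_lattice) simp
      then have "smul t e \<in> lattice (d - 1)" using pr_smul e pr_lift by simp
      then show False using E_prim[OF e(1)] t unfolding prim_def by blast
    qed
  qed
qed

lemma G_nz: "vzero \<notin> G"
proof
  assume "vzero \<in> G"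
  then consider "vzero = v 0" | e where "e \<in> E" "vzero = lift r e" by blast
  then show False
  proof cases
    case 1 then show ?thesis using v_nz[OF d0] by simp
  next
    case 2
    then have "e = pr vzero" using pr_lift by simp
    then have "e = vzero" using vlin_zero[OF pr_lin] by simp
    then show ?thesis using E_nz 2 by blast
  qed
qed

lemma G_simp: "simp_gens d G"
  unfolding simp_gens_def using G_fin G_lat G_li G_prim G_nz by blast

lemma G_uni: "lattice d \<inter> lin_span G \<subseteq> int_span G"
proof
  fix x assume x: "x \<in> lattice d \<inter> lin_span G"
  obtain c where c: "x = isum G c (\<lambda>u. u)" using lin_span_fin[OF G_fin] x by blast
  have prx: "pr x = isum E (\<lambda>e. c (lift r e)) (\<lambda>u. u)" using c pr_isumG by simp
  have "pr x \<in> lattice (d - 1)" using pr_lattice x by blast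
  moreover have "pr x \<in> lin_span E" unfolding prx by (rule lin_span_isum[OF E_fin]) (auto intro: lin_span_base)
  ultimately have "pr x \<in> int_span E" using E_uni by blast
  then obtain n where n: "\<forall>e\<in>E. n e \<in> \<int>" "pr x = isum E n (\<lambda>u. u)" using int_span_fin[OF E_fin] by blast
  have eqEn: "isum E (\<lambda>e. c (lift r e)) (\<lambda>u. u) = isum E n (\<lambda>u. u)" using prx n(2) by simp
  have cn: "\<And>e. e \<in> E \<Longrightarrow> c (lift r e) = n e"
    using lin_indep_unique[OF E_li E_fin eqEn] by blast
  have cint: "\<And>e. e \<in> E \<Longrightarrow> c (lift r e) \<in> \<int>" using cn n(1) by simp
  let ?y = "isum E (\<lambda>e. c (lift r e)) (lift r)"
  have yL: "?y \<in> lattice d" by (rule lattice_closed_isum[OF E_fin]) (use cint lift_lat in auto)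
  have "smul (c (v 0)) (v 0) = (\<lambda>i. x i - ?y i)" using c isumG_split[of c] by (simp add: smul_def)
  also have "\<dots> \<in> lattice d" using lattice_diff x yL by blast
  finally have "c (v 0) \<in> \<int>" by (rule prim_int[OF v_lat[OF d0] v_prim[OF d0]])
  then have ci: "\<And>g. g \<in> G \<Longrightarrow> c g \<in> \<int>" using cint by blast
  have "isum G c (\<lambda>u. u) \<in> int_span G"
    by (rule int_span_isum[OF G_fin]) (simp_all add: ci int_span_base)
  then show "x \<in> int_span G" using c by simp
qed

lemma G_C: "G \<subseteq> C"
proof
  fix g assume "g \<in> G"
  then consider "g = v 0" | e where "e \<in> E" "g = lift r e" by blast
  then show "g \<in> C"
  proof cases
    case 1 then show ?thesis using v0_C by simp
  next
    case 2
    then obtain xi where "lift r e = isum {..<d} xi v" "\<forall>j. xi j \<ge> 0" using lift_xi by blast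
    then show ?thesis using 2 C_mem by simp
  qed
qed

lemma D_unimod: "unimodular d (pos_hull G)"
  using simp_gens.unimodular[OF G_simp G_uni] .

lemma D_hilb: "hilb d (pos_hull G) \<subseteq> G"
  using simp_gens.hilb_sub[OF G_simp G_uni] .

lemma D_v0: "v 0 \<in> hilb d (pos_hull G)"
  using simp_gens.G_hilb[OF G_simp] by blast

lemma D_sub: "pos_hull G \<subseteq> C"
proof -
  have "G \<subseteq> pos_hull (v ` {..<d})" using G_C C_eq by simp
  then show ?thesis using pos_hull_trans C_eq by simp
qed

end


context mainctx
begin

lemma Delta_C: "Delta d C = convex_hull_v (insert vzero (v ` {..<d}))"
  unfolding Delta_def gens ..

lemma v0_isum: "v 0 = isum {..<d} (\<lambda>j. if j = 0 then 1 else 0) v"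
  using isum_single[of "{..<d}" 0 "\<lambda>j. if j = 0 then 1 else 0" v] d0 by simp

lemma in_scaled_Delta:
  assumes w: "w = isum {..<d} xi v" and xi: "\<forall>j. xi j \<ge> 0" and s: "(\<Sum>j<d. xi j) \<le> R" and R: "R > 0"
  shows "w \<in> scale_set R (Delta d C)"
proof -
  let ?V = "v ` {..<d}"
  let ?T = "insert vzero ?V"
  let ?inv = "the_inv_into {..<d} v"
  define sm where "sm = (\<Sum>j<d. xi j / R)"
  define lam where "lam t = (if t = vzero then 1 - sm else xi (?inv t) / R)" for t
  have nz: "vzero \<notin> ?V"
  proof
    assume "vzero \<in> ?V"
    then obtain j where j: "j < d" "vzero = v j" by blast
    then show False using v_nz[OF j(1)] by simp
  qed
  have finV: "finite ?V" by simp
  have sm1: "sm \<le> 1" unfolding sm_def using s R by (simp add: sum_divide_distrib[symmetric])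
  have invv: "\<And>j. j < d \<Longrightarrow> ?inv (v j) = j" using inj by (simp add: the_inv_into_f_f)
  have lamV: "\<And>j. j < d \<Longrightarrow> lam (v j) = xi j / R" unfolding lam_def using invv v_nz by simp
  have "(\<Sum>t\<in>?T. lam t) = lam vzero + (\<Sum>t\<in>?V. lam t)" using nz finV by simp
  also have "(\<Sum>t\<in>?V. lam t) = (\<Sum>j<d. lam (v j))" using sum.reindex[OF inj] by simp
  also have "\<dots> = sm" unfolding sm_def using lamV by simp
  finally have lsum: "(\<Sum>t\<in>?T. lam t) = 1" unfolding lam_def by simp
  have lpos: "\<forall>t\<in>?T. lam t \<ge> 0" using xi R sm1 unfolding lam_def by auto
  define p where "p = isum {..<d} (\<lambda>j. xi j / R) v"
  have "isum ?T lam (\<lambda>u. u) = (\<lambda>i. lam vzero * 0 + isum ?V lam (\<lambda>u. u) i)"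
    using isum_insert[OF finV nz, of lam "\<lambda>u. u"] by simp
  also have "isum ?V lam (\<lambda>u. u) = isum {..<d} (\<lambda>j. lam (v j)) v"
    using isum_reindex[OF inj, of lam "\<lambda>u. u"] by (simp add: comp_def)
  also have "\<dots> = p" unfolding p_def by (rule isum_cong) (simp add: lamV)
  finally have "p = isum ?T lam (\<lambda>u. u)" by simp
  then have "p \<in> Delta d C" unfolding Delta_C convex_hull_v_def isum_def
    using lsum lpos by blast
  moreover have "w = smul R p" unfolding w p_def isum_smul using R by simp
  ultimately show ?thesis unfolding scale_set_def by blast
qed

end

context piece
begin

lemma D_bound: assumes "r \<ge> 0" shows "hilb d (pos_hull G) \<subseteq> scale_set (r + 1) (Delta d C)"
proof
  fix w assume "w \<in> hilb d (pos_hull G)"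
  then have "w \<in> G" using D_hilb by blast
  then consider "w = v 0" | e where "e \<in> E" "w = lift r e" by blast
  then show "w \<in> scale_set (r + 1) (Delta d C)"
  proof cases
    case 1
    show ?thesis unfolding 1
      by (rule in_scaled_Delta[OF v0_isum]) (use assms d0 in auto)
  next
    case 2
    then obtain xi where xi: "lift r e = isum {..<d} xi v" "\<forall>j. xi j \<ge> 0" "(\<Sum>j<d. xi j) \<le> r + 1"
      using lift_xi by blast
    show ?thesis unfolding 2 by (rule in_scaled_Delta[OF xi]) (use assms in auto)
  qed
qed

lemma D_partb: assumes "w \<in> hilb d (pos_hull G)" "w \<noteq> v 0"
  shows "\<exists>xi::nat \<Rightarrow> real. w = (\<lambda>i. \<Sum>j<d. xi j * v j i) \<and> xi 0 < 1"
proof -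
  have "w \<in> G" using D_hilb assms by blast
  then obtain e where e: "e \<in> E" "w = lift r e" using assms(2) by blast
  then obtain xi where "lift r e = isum {..<d} xi v" "xi 0 < 1" using lift_xi by blast
  then show ?thesis using e by (auto simp: isum_def)
qed

end


lemma abs_sum_bound: fixes y g :: "'a \<Rightarrow> real" assumes "\<And>i. i \<in> I \<Longrightarrow> \<bar>y i\<bar> \<le> e"
  shows "\<bar>\<Sum>i\<in>I. y i * g i\<bar> \<le> e * (\<Sum>i\<in>I. \<bar>g i\<bar>)"
proof -
  have "\<bar>\<Sum>i\<in>I. y i * g i\<bar> \<le> (\<Sum>i\<in>I. \<bar>y i * g i\<bar>)" by (rule sum_abs)
  also have "\<dots> \<le> (\<Sum>i\<in>I. e * \<bar>g i\<bar>)"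
    by (rule sum_mono) (use assms in \<open>auto simp: abs_mult intro: mult_right_mono\<close>)
  also have "\<dots> = e * (\<Sum>i\<in>I. \<bar>g i\<bar>)" by (simp add: sum_distrib_left)
  finally show ?thesis .
qed

context mainctx
begin

lemma x_space_isum: "isum {..<d} xi v \<in> space d"
  by (rule space_closed_isum) (auto intro: v_space)

lemma xi_small:
  assumes gam: "\<And>i. i < d \<Longrightarrow> ev i = isum {..<d} (gam i) v" and x: "x = isum {..<d} xi v"
    and cl: "\<forall>i<d. \<bar>x i - v 0 i\<bar> \<le> e" and k: "0 < k" "k < d"
  shows "\<bar>xi k\<bar> \<le> e * (\<Sum>i<d. \<bar>gam i k\<bar>)"
proof -
  define y where "y = (\<lambda>i. x i - v 0 i)"
  have ys: "y \<in> space d" using x_space_isum x v_space[OF d0] unfolding y_def space_def by auto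
  have "y = isum {..<d} (\<lambda>i. y i) ev" by (rule space_expand[OF ys])
  also have "\<dots> = isum {..<d} (\<lambda>i. y i) (\<lambda>i. isum {..<d} (gam i) v)"
    by (rule isum_cong) (simp add: gam)
  also have "\<dots> = isum {..<d} (\<lambda>k. \<Sum>i<d. y i * gam i k) v" by (rule isum_swap) auto
  finally have y1: "y = isum {..<d} (\<lambda>k. \<Sum>i<d. y i * gam i k) v" .
  have y2: "y = isum {..<d} (\<lambda>j. xi j - (if j = 0 then 1 else 0)) v"
    unfolding y_def using x v0_isum isum_diff[of "{..<d}" xi v] by simp
  have "xi k - (if k = 0 then 1 else 0) = (\<Sum>i<d. y i * gam i k)"
    by (rule v_unique[OF _ k(2)]) (use y1 y2 in simp)
  then have "xi k = (\<Sum>i<d. y i * gam i k)" using k by simp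
  also have "\<bar>\<dots>\<bar> \<le> e * (\<Sum>i<d. \<bar>gam i k\<bar>)"
    by (rule abs_sum_bound) (use cl in \<open>simp add: y_def\<close>)
  finally show ?thesis .
qed

lemma ta_close:
  assumes xs: "x \<in> space d" and cl: "\<forall>i<d. \<bar>x i - v 0 i\<bar> \<le> e"
  shows "ta x \<ge> 1 - e * (\<Sum>i<d. \<bar>ta (ev i)\<bar>)"
proof -
  define y where "y = (\<lambda>i. x i - v 0 i)"
  have ys: "y \<in> space d" using xs v_space[OF d0] unfolding y_def space_def by auto
  have "x = (\<lambda>i. v 0 i + y i)" unfolding y_def by simp
  then have "ta x = ta (v 0) + ta y" using ta_add by metis
  also have "ta y = ta (isum {..<d} (\<lambda>i. y i) ev)" using space_expand[OF ys] by simp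
  also have "\<dots> = (\<Sum>i<d. y i * ta (ev i))" by (rule ta_isum) simp
  finally have tx: "ta x = 1 + (\<Sum>i<d. y i * ta (ev i))" using ta_v0 by simp
  have "\<bar>\<Sum>i<d. y i * ta (ev i)\<bar> \<le> e * (\<Sum>i<d. \<bar>ta (ev i)\<bar>)"
    by (rule abs_sum_bound) (use cl in \<open>simp add: y_def\<close>)
  then show ?thesis using tx by linarith
qed

lemma prv_unique:
  assumes eq: "isum {..<d} a (\<lambda>j. pr (v j)) = isum {..<d} b (\<lambda>j. pr (v j))" and k: "0 < k" "k < d"
  shows "a k = b k"
proof -
  define z where "z = isum {..<d} (\<lambda>j. a j - b j) v"
  have zs: "z \<in> space d" unfolding z_def by (rule x_space_isum)
  have "pr z = isum {..<d} (\<lambda>j. a j - b j) (\<lambda>j. pr (v j))" unfolding z_def by (rule pr_isum) simp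
  also have "\<dots> = vzero" using eq isum_diff[of "{..<d}" a "\<lambda>j. pr (v j)" b, symmetric] by simp
  finally have "z = smul (ta z) (v 0)" using ker[OF zs] by simp
  also have "\<dots> = isum {..<d} (\<lambda>j. if j = 0 then ta z else 0) v"
    using isum_single[of "{..<d}" 0 "\<lambda>j. if j = 0 then ta z else 0" v] d0 by simp
  finally have "a k - b k = (if k = 0 then ta z else 0)"
    using v_unique[OF _ k(2)] unfolding z_def by blast
  then show ?thesis using k by simp
qed

lemma gam_exists: assumes i: "i < d" shows "\<exists>g. ev i = isum {..<d} g v"
proof -
  have "ev i \<in> space d" using i unfolding space_def ev_def by auto
  then have "ev i \<in> lin_span C" using fd unfolding full_dim_def by blast
  moreover have "C \<subseteq> lin_span (v ` {..<d})" using C_eq pos_hull_sub_lin_span by simp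
  then have "lin_span C \<subseteq> lin_span (v ` {..<d})" by (rule lin_span_trans)
  ultimately have "ev i \<in> lin_span (v ` {..<d})" by blast
  then obtain c where "ev i = isum (v ` {..<d}) c (\<lambda>u. u)" using lin_span_fin by blast
  then have "ev i = isum {..<d} (c \<circ> v) v" using isum_reindex[OF inj, of c "\<lambda>u. u"] by (simp add: comp_def)
  then show ?thesis by blast
qed

end


context mainctx
begin

lemma corner:
  fixes r :: real and DD :: "vec set set"
  assumes finDD: "finite DD" and pieces: "\<And>Dp. Dp \<in> DD \<Longrightarrow> piece d C v U W r Dp" and cov: "\<Union>DD = Cp"
  shows "\<exists>eps>0. \<forall>x\<in>C. (\<forall>i<d. \<bar>x i - v 0 i\<bar> < eps) \<longrightarrow>
           (\<exists>Dp\<in>DD. x \<in> pos_hull (insert (v 0) (lift r ` ext_gens (d - 1) Dp)))"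
proof -
  define F where "F = (\<Union>Dp\<in>DD. ext_gens (d - 1) Dp)"
  have finF: "finite F" unfolding F_def using finDD piece.E_fin[OF pieces] by blast
  have FCp: "e \<in> Cp" if eF: "e \<in> F" for e
  proof -
    obtain Dp where "Dp \<in> DD" "e \<in> ext_gens (d - 1) Dp" using eF unfolding F_def by blast
    then have "e \<in> Dp" unfolding ext_gens_def extreme_ray_def by blast
    then show ?thesis using cov \<open>Dp \<in> DD\<close> by blast
  qed
  have Fnz: "e \<noteq> vzero" if "e \<in> F" for e
    using that unfolding F_def ext_gens_def extreme_ray_def by blast
  have "\<forall>e\<in>F. \<exists>b. (\<forall>j. b j \<ge> 0) \<and> e = isum {..<d} b (\<lambda>j. pr (v j))"
    using FCp Cp_coords by blast
  then obtain beta where beta: "\<forall>e\<in>F. (\<forall>j. beta e j \<ge> 0) \<and> e = isum {..<d} (beta e) (\<lambda>j. pr (v j))"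
    by (rule bchoice[elim_format]) blast
  define B where "B e = (\<Sum>j\<in>{1..<d}. beta e j)" for e
  have Bpos: "B e > 0" if e: "e \<in> F" for e
  proof (rule ccontr)
    assume "\<not> B e > 0"
    moreover have "B e \<ge> 0" unfolding B_def using beta e by (auto intro: sum_nonneg)
    ultimately have "B e = 0" by simp
    then have z: "\<forall>j\<in>{1..<d}. beta e j = 0" unfolding B_def using beta e
      by (subst sum_nonneg_eq_0_iff[symmetric]) auto
    have "e = isum {..<d} (beta e) (\<lambda>j. pr (v j))" using beta e by blast
    also have "\<dots> = isum {..<d} (\<lambda>_. 0) (\<lambda>j. pr (v j))"
    proof (rule isum_cong)
      fix j i assume j: "j \<in> {..<d}"
      show "beta e j * pr (v j) i = 0 * pr (v j) i"
      proof (cases "j = 0")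
        case True then show ?thesis using pr_v0 by simp
      next
        case False then show ?thesis using z j by simp
      qed
    qed
    also have "\<dots> = vzero" by (simp add: isum_def)
    finally show False using Fnz e by blast
  qed
  define del where "del = Min (insert 1 (B ` F))"
  have delpos: "del > 0" unfolding del_def using finF Bpos by (auto simp: Min_gr_iff)
  have delle: "del \<le> B e" if "e \<in> F" for e unfolding del_def using finF that by (auto intro: Min_le)
  define M where "M = Max (insert 0 ((\<lambda>e. \<bar>ta (lift r e)\<bar>) ` F))"
  have M0: "M \<ge> 0" unfolding M_def using finF by (auto intro: Max_ge)
  have Mge: "\<bar>ta (lift r e)\<bar> \<le> M" if "e \<in> F" for e unfolding M_def using finF that by (auto intro: Max_ge)
  have "\<forall>i. \<exists>g. i < d \<longrightarrow> ev i = isum {..<d} g v" using gam_exists by blast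
  then obtain gam where gam: "\<And>i. i < d \<Longrightarrow> ev i = isum {..<d} (gam i) v" by metis
  define K1 where "K1 = (\<Sum>k<d. \<Sum>i<d. \<bar>gam i k\<bar>)"
  define K2 where "K2 = (\<Sum>i<d. \<bar>ta (ev i)\<bar>)"
  have K1: "K1 \<ge> 0" unfolding K1_def by (auto intro: sum_nonneg)
  have K2: "K2 \<ge> 0" unfolding K2_def by (auto intro: sum_nonneg)
  define Q where "Q = K2 + M * K1 / del"
  have Q0: "Q \<ge> 0" unfolding Q_def using K1 K2 M0 delpos by simp
  define eps where "eps = 1 / (2 * (Q + 1))"
  have epspos: "eps > 0" unfolding eps_def using Q0 by simp
  have epsQ: "eps * Q \<le> 1 / 2" unfolding eps_def using Q0 by (simp add: field_simps)
  show ?thesis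
  proof (intro exI[of _ eps] conjI epspos ballI impI)
    fix x assume xC: "x \<in> C" and cl0: "\<forall>i<d. \<bar>x i - v 0 i\<bar> < eps"
    have cl: "\<forall>i<d. \<bar>x i - v 0 i\<bar> \<le> eps" using cl0 by (simp add: less_imp_le)
    have xs: "x \<in> space d" using xC C_space by blast
    obtain xi where xi: "\<forall>j. xi j \<ge> 0" "x = isum {..<d} xi v" using C_coords[OF xC] by blast
    have xik: "xi k \<le> eps * (\<Sum>i<d. \<bar>gam i k\<bar>)" if "k \<in> {1..<d}" for k
      using xi_small[OF gam xi(2) cl, of k] that by simp
    have sxi: "(\<Sum>k\<in>{1..<d}. xi k) \<le> eps * K1"
    proof -
      have "(\<Sum>k\<in>{1..<d}. xi k) \<le> (\<Sum>k\<in>{1..<d}. eps * (\<Sum>i<d. \<bar>gam i k\<bar>))"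
        by (rule sum_mono) (rule xik)
      also have "\<dots> \<le> (\<Sum>k<d. eps * (\<Sum>i<d. \<bar>gam i k\<bar>))"
        by (rule sum_mono2) (use epspos in \<open>auto intro!: mult_nonneg_nonneg sum_nonneg\<close>)
      also have "\<dots> = eps * K1" unfolding K1_def by (simp add: sum_distrib_left)
      finally show ?thesis .
    qed
    have tax: "ta x \<ge> 1 - eps * K2" unfolding K2_def by (rule ta_close[OF xs cl])
    have "pr x \<in> Cp" unfolding Cp_def using xC by blast
    then obtain Dp where Dp: "Dp \<in> DD" "pr x \<in> Dp" using cov by blast
    interpret P: piece d C v U W r Dp by (rule pieces[OF Dp(1)])
    let ?E = "ext_gens (d - 1) Dp"
    have EF: "?E \<subseteq> F" unfolding F_def using Dp(1) by blast
    obtain a where a: "\<forall>e\<in>?E. a e \<ge> 0" "pr x = isum ?E a (\<lambda>u. u)"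
      using pos_hull_fin[OF P.E_fin] Dp(2) P.Dp_eq by blast
    have prx1: "pr x = isum {..<d} xi (\<lambda>j. pr (v j))" unfolding xi(2) by (rule pr_isum) simp
    have "pr x = isum ?E a (\<lambda>e. isum {..<d} (beta e) (\<lambda>j. pr (v j)))"
      unfolding a(2) by (rule isum_cong) (use beta EF in auto)
    also have "\<dots> = isum {..<d} (\<lambda>j. \<Sum>e\<in>?E. a e * beta e j) (\<lambda>j. pr (v j))"
      by (rule isum_swap[OF P.E_fin]) simp
    finally have prx2: "pr x = isum {..<d} (\<lambda>j. \<Sum>e\<in>?E. a e * beta e j) (\<lambda>j. pr (v j))" .
    have xieq: "xi k = (\<Sum>e\<in>?E. a e * beta e k)" if "k \<in> {1..<d}" for k
      by (rule prv_unique[OF _]) (use prx1 prx2 that in auto)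
    have "(\<Sum>k\<in>{1..<d}. xi k) = (\<Sum>k\<in>{1..<d}. \<Sum>e\<in>?E. a e * beta e k)" using xieq by simp
    also have "\<dots> = (\<Sum>e\<in>?E. a e * B e)" unfolding B_def sum_distrib_left by (rule sum.swap)
    also have "\<dots> \<ge> (\<Sum>e\<in>?E. a e * del)"
      by (rule sum_mono) (use a(1) delle EF in \<open>auto intro: mult_left_mono\<close>)
    finally have "(\<Sum>e\<in>?E. a e) * del \<le> eps * K1" using sxi by (simp add: sum_distrib_right)
    then have sa: "(\<Sum>e\<in>?E. a e) \<le> eps * K1 / del" using delpos by (simp add: field_simps)
    have "(\<Sum>e\<in>?E. a e * ta (lift r e)) \<le> (\<Sum>e\<in>?E. a e * M)"
    proof (rule sum_mono)
      fix e assume e: "e \<in> ?E"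
      have "ta (lift r e) \<le> M" using Mge[of e] e EF by auto
      then show "a e * ta (lift r e) \<le> a e * M" using a(1) e by (simp add: mult_left_mono)
    qed
    also have "\<dots> = (\<Sum>e\<in>?E. a e) * M" by (simp add: sum_distrib_right)
    also have "\<dots> \<le> eps * K1 / del * M" using sa M0 by (rule mult_right_mono)
    finally have sat: "(\<Sum>e\<in>?E. a e * ta (lift r e)) \<le> eps * (M * K1 / del)" by (simp add: field_simps)
    define s where "s = ta x - (\<Sum>e\<in>?E. a e * ta (lift r e))"
    have "s \<ge> 1 - eps * Q" unfolding s_def Q_def using tax sat by (simp add: algebra_simps)
    then have s0: "s \<ge> 0" using epsQ by simp
    have Wl: "W e = (\<lambda>i. lift r e i - ta (lift r e) * v 0 i)" if e: "e \<in> ?E" for e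
    proof -
      have "lift r e \<in> space d" using P.lift_lat[OF e] lattice_sub_space by blast
      then have "lift r e = (\<lambda>i. W (pr (lift r e)) i + ta (lift r e) * v 0 i)" by (rule decomp)
      then show ?thesis using P.pr_lift[OF e] by (auto simp: fun_eq_iff)
    qed
    have "x = (\<lambda>i. W (pr x) i + ta x * v 0 i)" by (rule decomp[OF xs])
    also have "W (pr x) = isum ?E a W" unfolding a(2) using vlin_isum[OF linW P.E_fin] by simp
    also have "\<dots> = isum ?E a (\<lambda>e i. lift r e i - ta (lift r e) * v 0 i)"
      by (rule isum_cong) (simp add: Wl)
    finally have xeq0: "x = (\<lambda>i. isum ?E a (\<lambda>e i. lift r e i - ta (lift r e) * v 0 i) i + ta x * v 0 i)" .
    have pw: "isum ?E a (\<lambda>e i. lift r e i - ta (lift r e) * v 0 i) i =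
       isum ?E a (lift r) i - (\<Sum>e\<in>?E. a e * ta (lift r e)) * v 0 i" for i
      by (simp add: isum_def right_diff_distrib sum_subtractf sum_distrib_right mult.assoc)
    have xeq: "x = (\<lambda>i. isum ?E a (lift r) i + s * v 0 i)"
    proof
      fix i show "x i = isum ?E a (lift r) i + s * v 0 i"
        using fun_cong[OF xeq0, of i] pw[of i] unfolding s_def by (simp add: algebra_simps)
    qed
    let ?G = "insert (v 0) (lift r ` ?E)"
    have "isum ?E a (lift r) \<in> pos_hull ?G"
      by (rule pos_hull_isum[OF P.E_fin]) (use a(1) in \<open>auto intro: pos_hull_base\<close>)
    moreover have "smul s (v 0) \<in> pos_hull ?G" using s0 by (auto intro: pos_hull_smul pos_hull_base)
    ultimately have "(\<lambda>i. isum ?E a (lift r) i + smul s (v 0) i) \<in> pos_hull ?G" by (rule pos_hull_add)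
    then have "x \<in> pos_hull ?G" using xeq by (simp add: smul_def)
    then show "\<exists>Dp\<in>DD. x \<in> pos_hull (insert (v 0) (lift r ` ext_gens (d - 1) Dp))" using Dp(1) by blast
  qed
qed

end


lemma cone_const_fin: assumes "cone_const e < \<infinity>"
  shows "\<exists>c. cone_const_ok e c \<and> cone_const e = enat c"
proof -
  define A where "A = {c. cone_const_ok e c}"
  have ne: "enat ` A \<noteq> {}"
  proof
    assume a: "enat ` A = {}"
    have "cone_const e = Inf (enat ` A)" unfolding cone_const_def A_def ..
    also have "\<dots> = \<infinity>" unfolding a Inf_enat_def by simp
    finally show False using assms by simp
  qed
  have "cone_const e = Inf (enat ` A)" unfolding cone_const_def A_def ..
  also have "\<dots> = (LEAST x. x \<in> enat ` A)" unfolding Inf_enat_def using ne by (rule if_not_P)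
  finally have ce: "cone_const e = (LEAST x. x \<in> enat ` A)" .
  have "\<exists>x. x \<in> enat ` A" using ne by blast
  then have "(LEAST x. x \<in> enat ` A) \<in> enat ` A" by (rule LeastI_ex)
  then obtain c where c: "c \<in> A" "(LEAST x. x \<in> enat ` A) = enat c" by blast
  have "cone_const_ok e c" using c(1) unfolding A_def by simp
  moreover have "cone_const e = enat c" using ce c(2) by simp
  ultimately show ?thesis by blast
qed

lemma scale_set_mono: "A \<subseteq> B \<Longrightarrow> scale_set c A \<subseteq> scale_set c B"
  unfolding scale_set_def by blast

theorem lemma5p1:
  fixes d :: nat and C :: "vec set" and v :: "nat \<Rightarrow> vec"
  assumes fin: "cone_const (d - 1) < \<infinity>"
    and d1: "d \<ge> 1"
    and rat: "rational_cone d C" and fd: "full_dim d C" and simp: "simplicial d C"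
    and inj: "inj_on v {..<d}" and gens: "v ` {..<d} = ext_gens d C"
  shows "\<exists>\<C>. finite \<C> \<and> (\<forall>D\<in>\<C>. unimodular d D) \<and> covers_corner d C (v 0) \<C> \<and>
     (\<forall>D\<in>\<C>. hilb d D \<subseteq>
        scale_set (real (the_enat (cone_const (d - 1)) + 1)) (Delta d C)) \<and>
     (\<forall>D\<in>\<C>. \<forall>w\<in>hilb d D. w \<noteq> v 0 \<longrightarrow>
        (\<exists>\<xi>::nat \<Rightarrow> real. w = (\<lambda>i. \<Sum>j<d. \<xi> j * v j i) \<and> \<xi> 0 < 1))"
proof -
  obtain c where c: "cone_const_ok (d - 1) c" "cone_const (d - 1) = enat c"
    using cone_const_fin[OF fin] by blast
  have tc: "the_enat (cone_const (d - 1)) = c" using c(2) by simp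
  have "v 0 \<in> v ` {..<d}" using d1 by simp
  then have v0e: "v 0 \<in> ext_gens d C" using gens by simp
  then have v0: "v 0 \<in> lattice d" "prim d (v 0)" "v 0 \<noteq> vzero"
    unfolding ext_gens_prim extreme_ray_def by blast+
  obtain U W where UW: "lat_iso d U W" "U (v 0) = ev (d - 1)"
    using unimod_completion[OF d1 v0] by blast
  have MC: "mainctx d C v U W"
    by (rule mainctx.intro[OF d1 rat fd simp inj gens UW(1) UW(2)])
  interpret M: mainctx d C v U W by (rule MC)
  obtain DD where DD: "finite DD" "\<forall>D\<in>DD. unimodular (d - 1) D" "\<Union>DD = M.Cp"
    "\<forall>D\<in>DD. hilb (d - 1) D \<subseteq> scale_set (real c) (Delta (d - 1) M.Cp)"
    using c(1)[unfolded cone_const_ok_def, rule_format, OF conjI[OF M.Cp_rc M.Cp_fd]] by (elim exE conjE) (rule that)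
  have hK: "hilb (d - 1) D \<subseteq> M.K (real c)" if "D \<in> DD" for D
  proof -
    have "hilb (d - 1) D \<subseteq> scale_set (real c) (Delta (d - 1) M.Cp)" using DD(4) that by blast
    also have "\<dots> \<subseteq> scale_set (real c) (M.K 1)" by (rule scale_set_mono[OF M.Delta_Cp_K])
    also have "\<dots> \<subseteq> M.K (real c)" by (rule M.scale_K) simp
    finally show ?thesis .
  qed
  have pc: "piece d C v U W (real c) D" if "D \<in> DD" for D
    by (rule piece.intro[OF MC], rule piece_axioms.intro) (use DD(2) that hK[OF that] in simp_all)
  define CC where "CC = (\<lambda>D. pos_hull (insert (v 0) (M.lift (real c) ` ext_gens (d - 1) D))) ` DD"
  let ?F = "\<lambda>D. pos_hull (insert (v 0) (M.lift (real c) ` ext_gens (d - 1) D))"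
  have CCE: "\<And>X. X \<in> CC \<Longrightarrow> \<exists>D\<in>DD. X = ?F D" unfolding CC_def by blast
  have "finite CC" unfolding CC_def using DD(1) by simp
  moreover have "\<forall>X\<in>CC. unimodular d X"
  proof
    fix X assume "X \<in> CC"
    then obtain D where D: "D \<in> DD" "X = ?F D" using CCE by blast
    show "unimodular d X" unfolding D(2) by (rule piece.D_unimod[OF pc[OF D(1)]])
  qed
  moreover have "covers_corner d C (v 0) CC"
    unfolding covers_corner_def
  proof (intro conjI)
    show "\<forall>X\<in>CC. X \<subseteq> C \<and> v 0 \<in> hilb d X"
    proof
      fix X assume "X \<in> CC"
      then obtain D where D: "D \<in> DD" "X = ?F D" using CCE by blast
      show "X \<subseteq> C \<and> v 0 \<in> hilb d X" unfolding D(2)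
        using piece.D_sub[OF pc[OF D(1)]] piece.D_v0[OF pc[OF D(1)]] by (rule conjI)
    qed
    obtain eps where eps: "eps > 0" "\<forall>x\<in>C. (\<forall>i<d. \<bar>x i - v 0 i\<bar> < eps) \<longrightarrow>
           (\<exists>Dp\<in>DD. x \<in> ?F Dp)"
      using M.corner[OF DD(1) pc DD(3)] by blast
    have "\<forall>x\<in>C. (\<forall>i<d. \<bar>x i - v 0 i\<bar> < eps) \<longrightarrow> x \<in> \<Union>CC"
    proof (intro ballI impI)
      fix x assume "x \<in> C" "\<forall>i<d. \<bar>x i - v 0 i\<bar> < eps"
      then obtain Dp where "Dp \<in> DD" "x \<in> ?F Dp" using eps(2) by blast
      then show "x \<in> \<Union>CC" unfolding CC_def by blast
    qed
    then show "\<exists>\<epsilon>>0. \<forall>x\<in>C. (\<forall>i<d. \<bar>x i - v 0 i\<bar> < \<epsilon>) \<longrightarrow> x \<in> \<Union>CC"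
      using eps(1) by blast
  qed
  moreover have "\<forall>X\<in>CC. hilb d X \<subseteq> scale_set (real (the_enat (cone_const (d - 1)) + 1)) (Delta d C)"
  proof
    fix X assume "X \<in> CC"
    then obtain D where D: "D \<in> DD" "X = ?F D" using CCE by blast
    have "hilb d X \<subseteq> scale_set (real c + 1) (Delta d C)" unfolding D(2)
      by (rule piece.D_bound[OF pc[OF D(1)]]) simp
    then show "hilb d X \<subseteq> scale_set (real (the_enat (cone_const (d - 1)) + 1)) (Delta d C)" unfolding tc by (simp add: add.commute)
  qed
  moreover have "\<forall>X\<in>CC. \<forall>w\<in>hilb d X. w \<noteq> v 0 \<longrightarrow>
        (\<exists>\<xi>::nat \<Rightarrow> real. w = (\<lambda>i. \<Sum>j<d. \<xi> j * v j i) \<and> \<xi> 0 < 1)"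
  proof (intro ballI impI)
    fix X w assume X: "X \<in> CC" and w: "w \<in> hilb d X" "w \<noteq> v 0"
    then obtain D where D: "D \<in> DD" "X = ?F D" using CCE by blast
    show "\<exists>\<xi>::nat \<Rightarrow> real. w = (\<lambda>i. \<Sum>j<d. \<xi> j * v j i) \<and> \<xi> 0 < 1"
      by (rule piece.D_partb[OF pc[OF D(1)]]) (use w D(2) in simp_all)
  qed
  ultimately show ?thesis by (intro exI[of _ CC] conjI)
qed


end
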